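(* Consider $n$ agents indexed by $\mathcal{V}=\{1,\dots,n\}$ over a fixed directed strongly connected graph with nonnegative weights $a_{ij}$ ($a_{ij}>0$ iff $j\in N_i$) and Laplacian $L$. Assume the CFP solution set $\mathbf{X}^*$ is non-empty and that there is $K\ge0$ with $\|\nabla g_i^+(x)\|\le K$ for all $x$ and all $i$. Let $\{\alpha(t)\},\{\beta(t)\}$ be sequences with (a) $\alpha(t)\in[0,1]$, $\sum_{t=0}^\infty\alpha(t)=\infty$, $\sum_{t=0}^\infty\alpha^2(t)<\infty$; (b) $\beta(t)\ge0$, $\sum_{t=0}^\infty\beta(t)=\infty$, $\sum_{t=0}^\infty\beta^2(t)<\infty$. Let $0<h<\varrho$, where $$\varrho=\min\Big[\frac{1}{\max_{1\le i\le n}\sum_{j=1}^n a_{ij}},\ \min_{2\le i\le n}\frac{2\,\mathrm{Re}(\lambda_i(L))}{|\lambda_i(L)|^2}\Big].$$ The agents' states $x_i(t)\in\mathbb{R}^m$ evolve by $x_i(t+1)=x_i(t)+u_i(t)$, $t=0,1,2,\dots$, with $$y_i(t)=x_i(t)+h\sum_{j\in N_i}a_{ij}(x_j(t)-x_i(t)),\quad \nabla_i(t)=\beta(t)\nabla g_i^+(y_i(t)),\quad \xi_i(t)=y_i(t)-\nabla_i(t),$$ $$\varphi_i(t)=\alpha(t)\big(\xi_i(t)-P_{X_i}(\xi_i(t))\big),\quad \phi_i(t)=-\nabla_i(t)-\varphi_i(t),\quad u_i(t)=h\sum_{j\in N_i}a_{ij}(x_j(t)-x_i(t))+\phi_i(t).$$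 Then the agents reach consensus asymptotically and there is $x^*\in\mathbf{X}^*$ with $\lim_{t\to\infty}x_i(t)=x^*$ for all $i$.
   Context: For each $i$, $g_i:\mathbb{R}^m\to\mathbb{R}$ is convex and continuous, $X_i\subset\mathbb{R}^m$ closed convex, $X=\bigcap_i X_i$; the CFP asks for $x$ with $g_i(x)\le0$ for all $i$ and $x\in X$, with solution set $\mathbf{X}^*$. $g_i^+=\max[g_i,0]$; $\nabla g_i^+(y)$ denotes a subgradient of $g_i^+$ at $y$ (chosen as $0$ if $g_i(y)\le 0$ and as a subgradient of $g_i$ otherwise); $P_{X_i}$ is Euclidean projection onto $X_i$. The Laplacian $L=(l_{ij})$ has $l_{ij}=-a_{ij}$ for $i\ne j$ and $l_{ii}=\sum_j a_{ij}$; since the graph has a spanning tree, $L$ has a simple eigenvalue $\lambda_1(L)=0$ and its other eigenvalues $\lambda_2(L),\dots,\lambda_n(L)$ have positive real parts. Consensus means $\|x_i(t)-x_j(t)\|\to0$ for all $i,j$. *)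

theory Defs
  imports "HOL-Analysis.Analysis"
begin

definition neighbours :: "('n \<Rightarrow> 'n \<Rightarrow> real) \<Rightarrow> 'n \<Rightarrow> 'n set" where
  "neighbours a i = {j. a i j > 0}"

text \<open>Directed graph: edge j \<rightarrow> i iff j \<in> N_i. Strongly connected: every node reaches every node.\<close>
definition strongly_connected :: "('n \<Rightarrow> 'n \<Rightarrow> real) \<Rightarrow> bool" where
  "strongly_connected a \<longleftrightarrow> (\<forall>i j. (i, j) \<in> {(u, v). a v u > 0}\<^sup>*)"

definition laplacian :: "('n::finite \<Rightarrow> 'n \<Rightarrow> real) \<Rightarrow> real^'n^'n" where
  "laplacian a = (\<chi> i j. if i = j then (\<Sum>k\<in>UNIV. a i k) else - a i j)"

definition is_eigenvalue :: "real^'n^'n \<Rightarrow> complex \<Rightarrow> bool" where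
  "is_eigenvalue M lam \<longleftrightarrow> (\<exists>v :: complex^'n. v \<noteq> 0 \<and> map_matrix complex_of_real M *v v = lam *s v)"

text \<open>The bound \<rho>. Since 0 is a simple eigenvalue of L, \<lambda>_2,...,\<lambda>_n are exactly the
  nonzero eigenvalues, so the inner minimum ranges over the nonzero eigenvalues.\<close>
definition rho :: "('n::finite \<Rightarrow> 'n \<Rightarrow> real) \<Rightarrow> real" where
  "rho a = min (1 / Max (range (\<lambda>i. \<Sum>j\<in>UNIV. a i j)))
     (Min {2 * Re lam / (cmod lam)\<^sup>2 | lam. is_eigenvalue (laplacian a) lam \<and> lam \<noteq> 0})"

definition cfp_solutions :: "('n \<Rightarrow> 'v \<Rightarrow> real) \<Rightarrow> ('n \<Rightarrow> 'v set) \<Rightarrow> 'v set" where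
  "cfp_solutions g X = {x. (\<forall>i. g i x \<le> 0) \<and> x \<in> (\<Inter>i. X i)}"

text \<open>dg is a valid choice of \<nabla>g^+: 0 where g \<le> 0, a subgradient of g elsewhere.\<close>
definition plus_subgrad_choice :: "('v::real_inner \<Rightarrow> real) \<Rightarrow> ('v \<Rightarrow> 'v) \<Rightarrow> bool" where
  "plus_subgrad_choice g dg \<longleftrightarrow>
     (\<forall>y. (g y \<le> 0 \<longrightarrow> dg y = 0) \<and>
          (g y > 0 \<longrightarrow> (\<forall>z. g z \<ge> g y + dg y \<bullet> (z - y))))"

end

theory Submission
  imports Defs
begin




lemma RS_lemma:
  fixes V c b :: "nat \<Rightarrow> real"
  assumes V0: "\<And>t. V t \<ge> 0" and c0: "\<And>t. c t \<ge> 0" and b0: "\<And>t. b t \<ge> 0"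
    and bs: "summable b" and step: "\<And>t. V (Suc t) \<le> V t - c t + b t"
  shows "convergent V" "summable c"
proof -
  have key: "V T + (\<Sum>s<T. c s) \<le> V 0 + (\<Sum>s<T. b s)" for T
  proof (induction T)
    case (Suc T) then show ?case using step[of T] by simp
  qed simp
  have bb: "(\<Sum>s<T. b s) \<le> suminf b" for T
    using sum_le_suminf[OF bs, of "{..<T}"] b0 by auto
  show "summable c"
  proof (rule bounded_imp_summable[where B="V 0 + suminf b"])
    fix n
    have "(\<Sum>k\<le>n. c k) = (\<Sum>k<Suc n. c k)" using lessThan_Suc_atMost by simp
    also have "\<dots> \<le> V 0 + suminf b" using key[of "Suc n"] bb[of "Suc n"] V0[of "Suc n"] by linarith
    finally show "(\<Sum>k\<le>n. c k) \<le> V 0 + suminf b" .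
  qed (rule c0)
  define Wf where "Wf T = V T - (\<Sum>s<T. b s)" for T
  have "decseq Wf" unfolding decseq_Suc_iff
  proof
    fix n show "Wf (Suc n) \<le> Wf n" using step[of n] c0[of n] by (simp add: Wf_def)
  qed
  moreover have "\<forall>i. - suminf b \<le> Wf i" 
  proof
    fix i show "- suminf b \<le> Wf i" unfolding Wf_def using bb[of i] V0[of i] by linarith
  qed
  ultimately obtain L where L: "Wf \<longlonglongrightarrow> L" by (rule decseq_convergent)
  have "(\<lambda>T. \<Sum>s<T. b s) \<longlonglongrightarrow> suminf b" by (rule summable_LIMSEQ[OF bs])
  with L have "(\<lambda>T. Wf T + (\<Sum>s<T. b s)) \<longlonglongrightarrow> L + suminf b" by (intro tendsto_add)
  then show "convergent V" unfolding Wf_def convergent_def by auto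
qed

lemma null_from_recursion:
  fixes a b :: "nat \<Rightarrow> real"
  assumes a0: "\<And>t. 0 \<le> a t" and aA: "\<And>t. a t \<le> A" and N: "N > 0" and q: "0 \<le> q" "q < 1"
    and rec: "\<And>t. a (t + N) \<le> q * a t + b t" and b: "b \<longlonglongrightarrow> 0"
  shows "a \<longlonglongrightarrow> 0"
proof (rule LIMSEQ_I)
  fix r :: real assume r: "r > 0"
  have "(1 - q) * (r/2) > 0" using q r by simp
  from LIMSEQ_D[OF b this] obtain T where T0: "\<And>t. t \<ge> T \<Longrightarrow> norm (b t - 0) < (1 - q) * (r/2)" by blast
  have T: "b t < (1 - q) * (r/2)" if "t \<ge> T" for t using T0[OF that] by simp
  have A0: "A \<ge> 0" using a0 aA order_trans by blast
  have ind: "a (t + k * N) \<le> q ^ k * A + r / 2" if "t \<ge> T" for t k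
  proof (induction k)
    case 0 then show ?case using aA[of t] r by simp
  next
    case (Suc k)
    have "a (t + Suc k * N) = a ((t + k * N) + N)" by (simp add: algebra_simps)
    also have "\<dots> \<le> q * a (t + k*N) + b (t + k*N)" by (rule rec)
    also have "\<dots> \<le> q * (q ^ k * A + r / 2) + (1 - q) * (r/2)"
      using Suc q T[of "t + k*N"] that by (intro add_mono mult_left_mono) auto
    also have "\<dots> = q ^ Suc k * A + r/2" by (simp add: field_simps)
    finally show ?case .
  qed
  have "(\<lambda>k. q ^ k * A) \<longlonglongrightarrow> 0" using q by (intro tendsto_mult_left_zero LIMSEQ_power_zero) auto
  then obtain k where k: "q ^ k * A < r / 2" using r
    by (metis (no_types, lifting) half_gt_zero LIMSEQ_D norm_mult norm_power real_norm_def abs_of_nonneg A0 q(1) zero_le_power mult_nonneg_nonneg order_refl diff_zero le_add_same_cancel1 add_0)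
  show "\<exists>no. \<forall>n\<ge>no. norm (a n - 0) < r"
  proof (intro exI allI impI)
    fix n assume n: "n \<ge> T + k * N"
    have "a n = a ((n - k*N) + k*N)" using n by simp
    also have "\<dots> \<le> q ^ k * A + r/2" using n by (intro ind) auto
    finally show "norm (a n - 0) < r" using k a0[of n] by simp
  qed
qed





lemma stoch_diff:
  fixes M :: "'n::finite \<Rightarrow> 'n \<Rightarrow> real" and v :: "'n \<Rightarrow> 'v::real_normed_vector"
  assumes M0: "\<And>i j. M i j \<ge> 0" and M1: "\<And>i. (\<Sum>j\<in>UNIV. M i j) = 1"
    and Md: "\<And>i j. M i j \<ge> \<delta>" and d0: "\<delta> \<ge> 0"
    and D: "\<And>j l. norm (v j - v l) \<le> D"
  shows "norm ((\<Sum>j\<in>UNIV. M i j *\<^sub>R v j) - (\<Sum>j\<in>UNIV. M k j *\<^sub>R v j)) \<le> (1 - \<delta>\<^sup>2) * D"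
proof -
  have D0: "D \<ge> 0" using D[of undefined undefined] by simp
  have eq: "(\<Sum>j\<in>UNIV. M i j *\<^sub>R v j) - (\<Sum>j\<in>UNIV. M k j *\<^sub>R v j)
      = (\<Sum>j\<in>UNIV. \<Sum>l\<in>UNIV. (M i j * M k l) *\<^sub>R (v j - v l))"
  proof -
    have "(\<Sum>j\<in>UNIV. \<Sum>l\<in>UNIV. (M i j * M k l) *\<^sub>R (v j - v l))
       = (\<Sum>j\<in>UNIV. \<Sum>l\<in>UNIV. (M i j * M k l) *\<^sub>R v j) - (\<Sum>j\<in>UNIV. \<Sum>l\<in>UNIV. (M i j * M k l) *\<^sub>R v l)"
      by (simp only: scaleR_diff_right sum_subtractf)
    also have "(\<Sum>j\<in>UNIV. \<Sum>l\<in>UNIV. (M i j * M k l) *\<^sub>R v j) = (\<Sum>j\<in>UNIV. M i j *\<^sub>R v j)"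
    proof (rule sum.cong[OF refl])
      fix j
      have "(\<Sum>l\<in>UNIV. (M i j * M k l) *\<^sub>R v j) = (\<Sum>l\<in>UNIV. M i j * M k l) *\<^sub>R v j"
        by (rule scaleR_sum_left[symmetric])
      also have "(\<Sum>l\<in>UNIV. M i j * M k l) = M i j" by (simp only: sum_distrib_left[symmetric] M1 mult_1_right)
      finally show "(\<Sum>l\<in>UNIV. (M i j * M k l) *\<^sub>R v j) = M i j *\<^sub>R v j" .
    qed
    also have "(\<Sum>j\<in>UNIV. \<Sum>l\<in>UNIV. (M i j * M k l) *\<^sub>R v l) = (\<Sum>l\<in>UNIV. \<Sum>j\<in>UNIV. (M i j * M k l) *\<^sub>R v l)"
      by (rule sum.swap)
    also have "\<dots> = (\<Sum>l\<in>UNIV. M k l *\<^sub>R v l)"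
    proof (rule sum.cong[OF refl])
      fix l
      have "(\<Sum>j\<in>UNIV. (M i j * M k l) *\<^sub>R v l) = (\<Sum>j\<in>UNIV. M i j * M k l) *\<^sub>R v l"
        by (rule scaleR_sum_left[symmetric])
      also have "(\<Sum>j\<in>UNIV. M i j * M k l) = M k l" by (simp only: sum_distrib_right[symmetric] M1 mult_1_left)
      finally show "(\<Sum>j\<in>UNIV. (M i j * M k l) *\<^sub>R v l) = M k l *\<^sub>R v l" .
    qed
    finally show ?thesis by simp
  qed
  have "norm (\<Sum>j\<in>UNIV. \<Sum>l\<in>UNIV. (M i j * M k l) *\<^sub>R (v j - v l))
      \<le> (\<Sum>j\<in>UNIV. \<Sum>l\<in>UNIV. (M i j * M k l) * (if j = l then 0 else D))"
  proof -
    have "norm (\<Sum>j\<in>UNIV. \<Sum>l\<in>UNIV. (M i j * M k l) *\<^sub>R (v j - v l))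
        \<le> (\<Sum>j\<in>UNIV. norm (\<Sum>l\<in>UNIV. (M i j * M k l) *\<^sub>R (v j - v l)))" by (rule norm_sum)
    also have "\<dots> \<le> (\<Sum>j\<in>UNIV. \<Sum>l\<in>UNIV. norm ((M i j * M k l) *\<^sub>R (v j - v l)))"
      by (intro sum_mono norm_sum)
    also have "\<dots> \<le> (\<Sum>j\<in>UNIV. \<Sum>l\<in>UNIV. (M i j * M k l) * (if j = l then 0 else D))"
      using M0 D by (intro sum_mono) (auto intro!: mult_left_mono)
    finally show ?thesis .
  qed
  also have "\<dots> = (\<Sum>j\<in>UNIV. \<Sum>l\<in>UNIV. (M i j * M k l) * D) - (\<Sum>j\<in>UNIV. (M i j * M k j) * D)"
  proof -
    have "(\<Sum>l\<in>UNIV. (M i j * M k l) * (if j = l then 0 else D)) = (\<Sum>l\<in>UNIV. (M i j * M k l) * D) - (M i j * M k j) * D" for j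
    proof -
      have "(\<Sum>l\<in>UNIV. (M i j * M k l) * (if j = l then 0 else D)) = (\<Sum>l\<in>UNIV. (M i j * M k l) * D - (if l = j then (M i j * M k j) * D else 0))"
        by (intro sum.cong) auto
      also have "\<dots> = (\<Sum>l\<in>UNIV. (M i j * M k l) * D) - (M i j * M k j) * D"
        by (simp add: sum_subtractf)
      finally show ?thesis .
    qed
    then have "(\<Sum>j\<in>UNIV. \<Sum>l\<in>UNIV. (M i j * M k l) * (if j = l then 0 else D)) = (\<Sum>j\<in>UNIV. (\<Sum>l\<in>UNIV. (M i j * M k l) * D) - (M i j * M k j) * D)"
      by (rule sum.cong[OF refl])
    then show ?thesis by (simp only: sum_subtractf)
  qed
  also have "(\<Sum>j\<in>UNIV. \<Sum>l\<in>UNIV. (M i j * M k l) * D) = D"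
  proof -
    have "(\<Sum>j\<in>UNIV. \<Sum>l\<in>UNIV. (M i j * M k l) * D) = (\<Sum>j\<in>UNIV. M i j * ((\<Sum>l\<in>UNIV. M k l) * D))"
      by (simp add: sum_distrib_left sum_distrib_right mult.assoc)
    also have "\<dots> = D" by (simp add: M1 sum_distrib_right[symmetric])
    finally show ?thesis .
  qed
  also have "(\<Sum>j\<in>UNIV. (M i j * M k j) * D) \<ge> \<delta>\<^sup>2 * D"
  proof -
    have "(\<Sum>j\<in>UNIV. (M i j * M k j) * D) \<ge> (M i undefined * M k undefined) * D"
      using M0 D0 by (intro member_le_sum) auto
    moreover have "M i undefined * M k undefined \<ge> \<delta>\<^sup>2"
      using Md[of i undefined] Md[of k undefined] d0 unfolding power2_eq_square by (intro mult_mono) auto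
    ultimately show ?thesis using D0 by (meson mult_right_mono order_trans)
  qed
  then have "D - (\<Sum>j\<in>UNIV. (M i j * M k j) * D) \<le> (1 - \<delta>\<^sup>2) * D" by (simp add: algebra_simps)
  finally show ?thesis unfolding eq .
qed

lemma norm_sum_sq_le:
  fixes w :: "'n \<Rightarrow> real" and u :: "'n \<Rightarrow> 'v::real_normed_vector"
  assumes "finite S" "S \<noteq> {}" "\<And>j. j \<in> S \<Longrightarrow> w j \<ge> 0" "(\<Sum>j\<in>S. w j) = 1"
  shows "(norm (\<Sum>j\<in>S. w j *\<^sub>R u j))\<^sup>2 \<le> (\<Sum>j\<in>S. w j * (norm (u j))\<^sup>2)"
proof -
  have "norm (\<Sum>j\<in>S. w j *\<^sub>R u j) \<le> (\<Sum>j\<in>S. w j * norm (u j))"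
    using assms(3) by (intro order_trans[OF norm_sum] sum_mono) auto
  then have "(norm (\<Sum>j\<in>S. w j *\<^sub>R u j))\<^sup>2 \<le> (\<Sum>j\<in>S. w j * norm (u j))\<^sup>2"
    by (intro power_mono) auto
  also have "\<dots> \<le> (\<Sum>j\<in>S. w j * (norm (u j))\<^sup>2)"
    using convex_on_sum[OF assms(1,2) convex_power2, of w "\<lambda>j. norm (u j)"] assms by auto
  finally show ?thesis .
qed






fun mpow :: "('n::finite \<Rightarrow> 'n \<Rightarrow> real) \<Rightarrow> nat \<Rightarrow> 'n \<Rightarrow> 'n \<Rightarrow> real" where
  "mpow W 0 i j = (if i = j then 1 else 0)"
| "mpow W (Suc k) i j = (\<Sum>l\<in>UNIV. W i l * mpow W k l j)"

lemma mpow_nonneg: assumes "\<And>i j. W i j \<ge> 0" shows "mpow W k i j \<ge> 0"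
  by (induction k arbitrary: i j) (auto intro!: sum_nonneg mult_nonneg_nonneg assms)

lemma mpow_rows: assumes "\<And>i. (\<Sum>j\<in>UNIV. W i j) = 1" shows "(\<Sum>j\<in>UNIV. mpow W k i j) = 1"
proof (induction k arbitrary: i)
  case 0 then show ?case by simp
next
  case (Suc k)
  have "(\<Sum>j\<in>UNIV. mpow W (Suc k) i j) = (\<Sum>l\<in>UNIV. W i l * (\<Sum>j\<in>UNIV. mpow W k l j))"
    by (simp only: mpow.simps sum_distrib_left) (rule sum.swap)
  also have "\<dots> = 1" using Suc assms by simp
  finally show ?case .
qed

lemma mpow_pos_mono:
  assumes W0: "\<And>i j. W i j \<ge> 0" and Wd: "\<And>i. W i i > 0" and p: "mpow W k i j > 0"
  shows "mpow W (k + d) i j > 0"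
proof (induction d)
  case (Suc d)
  have "mpow W (Suc (k + d)) i j \<ge> W i i * mpow W (k + d) i j"
    by simp (rule member_le_sum[of i UNIV "\<lambda>l. W i l * mpow W (k + d) l j"], auto intro!: mult_nonneg_nonneg W0 mpow_nonneg)
  moreover have "W i i * mpow W (k + d) i j > 0" using Suc Wd by simp
  ultimately show ?case by simp
qed (use p in simp)

lemma mpow_reach:
  assumes W0: "\<And>i j. W i j \<ge> 0" and Wd: "\<And>i. W i i > 0"
    and r: "(j, i) \<in> {(u, v). W v u > 0}\<^sup>*"
  shows "\<exists>k. mpow W k i j > 0"
  using r
proof (induction rule: rtrancl_induct)
  case base then show ?case by (intro exI[of _ 0]) simp
next
  case (step u i)
  then obtain k where k: "mpow W k u j > 0" by blast
  have "mpow W (Suc k) i j \<ge> W i u * mpow W k u j"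
    by simp (rule member_le_sum[of u UNIV "\<lambda>l. W i l * mpow W k l j"], auto intro!: mult_nonneg_nonneg W0 mpow_nonneg)
  moreover have "W i u * mpow W k u j > 0" using step k by simp
  ultimately show ?case by (intro exI[of _ "Suc k"]) simp
qed

lemma mpow_uniform:
  fixes W :: "'n::finite \<Rightarrow> 'n \<Rightarrow> real"
  assumes W0: "\<And>i j. W i j \<ge> 0" and Wd: "\<And>i. W i i > 0"
    and r: "\<And>i j. (j, i) \<in> {(u, v). W v u > 0}\<^sup>*"
  shows "\<exists>N>0. \<exists>\<delta>>0. \<forall>i j. mpow W N i j \<ge> \<delta>"
proof -
  have "\<forall>p. \<exists>k. mpow W k (fst p) (snd p) > 0"
  proof
    fix p show "\<exists>k. mpow W k (fst p) (snd p) > 0" using mpow_reach[of W "snd p" "fst p", OF W0 Wd r[of "snd p" "fst p"]] by simp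
  qed
  then have "\<exists>kf. \<forall>p. mpow W (kf p) (fst p) (snd p) > 0" by (rule choice)
  then obtain kf where kf: "\<And>p. mpow W (kf p) (fst p) (snd p) > 0" by blast
  define N where "N = Suc (Max (range kf))"
  have pos: "mpow W N i j > 0" for i j
  proof -
    have "kf (i, j) \<le> Max (range kf)" by simp
    then have eq: "kf (i,j) + (N - kf (i,j)) = N" unfolding N_def by arith
    show ?thesis using mpow_pos_mono[OF W0 Wd kf[of "(i,j)"], of "N - kf (i,j)"] unfolding eq by simp
  qed
  define \<delta> where "\<delta> = Min (range (\<lambda>p. mpow W N (fst p) (snd p)))"
  have "\<delta> > 0" unfolding \<delta>_def using pos by (subst Min_gr_iff) auto
  moreover have "mpow W N i j \<ge> \<delta>" for i j unfolding \<delta>_def by (rule Min_le) (auto intro: image_eqI[of _ _ "(i,j)"])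
  moreover have "N > 0" unfolding N_def by simp
  ultimately show ?thesis by blast
qed

lemma mpow_repr:
  fixes x :: "nat \<Rightarrow> 'n::finite \<Rightarrow> 'v::real_normed_vector"
  assumes W0: "\<And>i j. W i j \<ge> 0" and W1: "\<And>i. (\<Sum>j\<in>UNIV. W i j) = 1"
    and dyn: "\<And>t i. x (Suc t) i = (\<Sum>j\<in>UNIV. W i j *\<^sub>R x t j) + \<phi> t i"
    and e: "\<And>t i. norm (\<phi> t i) \<le> e t"
  shows "norm (x (t + k) i - (\<Sum>j\<in>UNIV. mpow W k i j *\<^sub>R x t j)) \<le> (\<Sum>s<k. e (t + s))"
proof (induction k arbitrary: i)
  case 0 
  have "(\<Sum>j\<in>UNIV. mpow W 0 i j *\<^sub>R x t j) = (\<Sum>j\<in>UNIV. if i = j then x t j else 0)"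
    by (intro sum.cong) auto
  also have "\<dots> = x t i" by simp
  finally have "(\<Sum>j\<in>UNIV. mpow W 0 i j *\<^sub>R x t j) = x t i" .
  then show ?case by simp
next
  case (Suc k)
  have sp: "(\<Sum>j\<in>UNIV. mpow W (Suc k) i j *\<^sub>R x t j) = (\<Sum>l\<in>UNIV. W i l *\<^sub>R (\<Sum>j\<in>UNIV. mpow W k l j *\<^sub>R x t j))"
    by (simp only: mpow.simps scaleR_sum_left scaleR_sum_right scaleR_scaleR) (rule sum.swap)
  have "x (t + Suc k) i - (\<Sum>j\<in>UNIV. mpow W (Suc k) i j *\<^sub>R x t j)
      = (\<Sum>l\<in>UNIV. W i l *\<^sub>R (x (t + k) l - (\<Sum>j\<in>UNIV. mpow W k l j *\<^sub>R x t j))) + \<phi> (t + k) i"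
    unfolding sp by (simp add: dyn scaleR_diff_right sum_subtractf)
  also have "norm \<dots> \<le> (\<Sum>l\<in>UNIV. W i l * (\<Sum>s<k. e (t + s))) + e (t + k)"
    by (intro order_trans[OF norm_triangle_ineq] add_mono e order_trans[OF norm_sum] sum_mono)
       (use W0 Suc in \<open>auto intro: mult_left_mono\<close>)
  also have "\<dots> = (\<Sum>s<Suc k. e (t + s))" by (simp add: sum_distrib_right[symmetric] W1)
  finally show ?case .
qed






lemma stationary_exists:
  fixes W :: "'n::finite \<Rightarrow> 'n \<Rightarrow> real"
  assumes W0: "\<And>i j. W i j \<ge> 0" and W1: "\<And>i. (\<Sum>j\<in>UNIV. W i j) = 1"
    and r: "\<And>i j. (j, i) \<in> {(u, v). W v u > 0}\<^sup>*"
  shows "\<exists>\<pi>. (\<forall>i. \<pi> i > 0) \<and> (\<Sum>i\<in>UNIV. \<pi> i) = 1 \<and> (\<forall>j. (\<Sum>i\<in>UNIV. \<pi> i * W i j) = \<pi> j)"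
proof -
  define S :: "(real^'n) set" where "S = {p. (\<forall>i. p$i \<ge> 0) \<and> (\<Sum>i\<in>UNIV. p$i) = 1}"
  define f :: "real^'n \<Rightarrow> real^'n" where "f p = (\<chi> j. \<Sum>i\<in>UNIV. p$i * W i j)" for p
  have "closed S" unfolding S_def
    by (intro closed_Collect_conj closed_Collect_all closed_Collect_le closed_Collect_eq continuous_intros)
  moreover have "bounded S"
  proof -
    have "norm p \<le> 1" if "p \<in> S" for p
    proof -
      have "norm p \<le> (\<Sum>i\<in>UNIV. \<bar>p$i\<bar>)" by (rule norm_le_l1_cart)
      also have "\<dots> = 1" using that unfolding S_def by simp
      finally show ?thesis .
    qed
    then show ?thesis unfolding bounded_iff by blast
  qed
  ultimately have cS: "compact S" by (simp add: compact_eq_bounded_closed)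
  have vS: "convex S" unfolding S_def convex_def
    by (auto simp: sum.distrib sum_distrib_left[symmetric] intro!: add_nonneg_nonneg mult_nonneg_nonneg)
  have nS: "S \<noteq> {}"
  proof -
    have "(\<chi> i. 1 / real CARD('n)) \<in> S" unfolding S_def by simp
    then show ?thesis by blast
  qed
  have cf: "continuous_on S f" unfolding f_def
    by (intro continuous_on_vec_lambda continuous_intros)
  have fS: "f \<in> S \<rightarrow> S"
  proof
    fix p assume p: "p \<in> S"
    have "(\<Sum>j\<in>UNIV. \<Sum>i\<in>UNIV. p$i * W i j) = (\<Sum>i\<in>UNIV. p$i * (\<Sum>j\<in>UNIV. W i j))"
      by (simp only: sum_distrib_left) (rule sum.swap)
    also have "\<dots> = 1" using p W1 unfolding S_def by simp
    finally show "f p \<in> S" using p W0 unfolding S_def f_def by (auto intro!: sum_nonneg mult_nonneg_nonneg)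
  qed
  obtain p where p: "p \<in> S" "f p = p" using brouwer[OF cS vS nS cf fS] by blast
  define \<pi> where "\<pi> i = p$i" for i
  have stat: "(\<Sum>i\<in>UNIV. \<pi> i * W i j) = \<pi> j" for j
    using arg_cong[OF p(2), of "\<lambda>q. q$j"] unfolding f_def \<pi>_def by simp
  have nn: "\<pi> i \<ge> 0" for i using p unfolding S_def \<pi>_def by simp
  have s1: "(\<Sum>i\<in>UNIV. \<pi> i) = 1" using p unfolding S_def \<pi>_def by simp
  have zprop: "\<pi> v = 0" if "\<pi> u = 0" "(u, v) \<in> {(u, v). W v u > 0}\<^sup>*" for u v
    using that(2,1)
  proof (induction rule: rtrancl_induct)
    case (step w v)
    have "(\<Sum>i\<in>UNIV. \<pi> i * W i w) = 0" using stat[of w] step by simp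
    then have "\<forall>i\<in>UNIV. \<pi> i * W i w = 0" using nn W0 by (subst sum_nonneg_eq_0_iff[symmetric]) auto
    then have "\<pi> v * W v w = 0" by simp
    then show ?case using step by simp
  qed
  have "\<pi> i > 0" for i
  proof (rule ccontr)
    assume "\<not> \<pi> i > 0"
    then have "\<pi> i = 0" using nn[of i] by simp
    then have "\<forall>v. \<pi> v = 0" using zprop r by blast
    then show False using s1 by simp
  qed
  then show ?thesis using s1 stat by blast
qed







locale cfp_alg =
  fixes W :: "'n::finite \<Rightarrow> 'n \<Rightarrow> real" and \<pi> :: "'n \<Rightarrow> real"
    and g :: "'n \<Rightarrow> 'v::euclidean_space \<Rightarrow> real" and dg :: "'n \<Rightarrow> 'v \<Rightarrow> 'v"
    and X :: "'n \<Rightarrow> 'v set" and K :: real and \<alpha> \<beta> :: "nat \<Rightarrow> real"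
    and x :: "nat \<Rightarrow> 'n \<Rightarrow> 'v" and x0 :: 'v and y :: "nat \<Rightarrow> 'n \<Rightarrow> 'v"
  assumes W0: "\<And>i j. W i j \<ge> 0" and W1: "\<And>i. (\<Sum>j\<in>UNIV. W i j) = 1"
    and Wpos: "\<exists>N>0. \<exists>\<delta>>0. \<forall>i j. mpow W N i j \<ge> \<delta>"
    and \<pi>_pos: "\<And>i. \<pi> i > 0" and \<pi>_sum: "(\<Sum>i\<in>UNIV. \<pi> i) = 1"
    and \<pi>_stat: "\<And>j. (\<Sum>i\<in>UNIV. \<pi> i * W i j) = \<pi> j"
    and g_cont: "\<And>i. continuous_on UNIV (g i)"
    and X_closed: "\<And>i. closed (X i)" and X_convex: "\<And>i. convex (X i)"
    and dg_zero: "\<And>i y. g i y \<le> 0 \<Longrightarrow> dg i y = 0"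
    and dg_sub: "\<And>i y z. g i y > 0 \<Longrightarrow> g i z \<ge> g i y + dg i y \<bullet> (z - y)"
    and K0: "K \<ge> 0" and dgK: "\<And>i y. norm (dg i y) \<le> K"
    and \<alpha>01: "\<And>t. 0 \<le> \<alpha> t \<and> \<alpha> t \<le> 1"
    and \<alpha>_div: "filterlim (\<lambda>N. \<Sum>t<N. \<alpha> t) at_top sequentially"
    and \<alpha>_sq: "summable (\<lambda>t. (\<alpha> t)\<^sup>2)"
    and \<beta>0: "\<And>t. 0 \<le> \<beta> t"
    and \<beta>_div: "filterlim (\<lambda>N. \<Sum>t<N. \<beta> t) at_top sequentially"
    and \<beta>_sq: "summable (\<lambda>t. (\<beta> t)\<^sup>2)"
    and x0_sol: "\<And>i. g i x0 \<le> 0" "\<And>i. x0 \<in> X i"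
    and dyn: "\<And>t i. x (Suc t) i = (1 - \<alpha> t) *\<^sub>R (y t i - \<beta> t *\<^sub>R dg i (y t i))
        + \<alpha> t *\<^sub>R closest_point (X i) (y t i - \<beta> t *\<^sub>R dg i (y t i))"
    and y_def: "\<And>t i. y t i = (\<Sum>j\<in>UNIV. W i j *\<^sub>R x t j)"
begin

definition "sol w \<longleftrightarrow> (\<forall>i. g i w \<le> 0 \<and> w \<in> X i)"
definition "gp i w = max (g i w) 0"
definition "\<xi> t i = y t i - \<beta> t *\<^sub>R dg i (y t i)"
definition "pr t i = closest_point (X i) (\<xi> t i)"
definition "d t i = norm (\<xi> t i - pr t i)"
definition "V w t = (\<Sum>i\<in>UNIV. \<pi> i * (norm (x t i - w))\<^sup>2)"
definition "c t = (\<Sum>i\<in>UNIV. \<pi> i * (\<alpha> t * (d t i)\<^sup>2 + 2 * \<beta> t * gp i (y t i)))"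

lemma \<pi>_nonneg: "\<pi> i \<ge> 0" using \<pi>_pos[of i] by simp

lemma norm_sub_scale_sq: fixes a b :: "'w::real_inner"
  shows "(norm (a - r *\<^sub>R b))\<^sup>2 = (norm a)\<^sup>2 - 2 * r * (a \<bullet> b) + r\<^sup>2 * (norm b)\<^sup>2"
  unfolding power2_norm_eq_inner by (simp add: inner_diff_left inner_diff_right inner_commute[of b a] algebra_simps power2_eq_square)

lemma X_ne: "X i \<noteq> {}" using x0_sol by auto

lemma dyn': "x (Suc t) i = \<xi> t i - \<alpha> t *\<^sub>R (\<xi> t i - pr t i)"
  using dyn[of t i] unfolding \<xi>_def pr_def by (simp add: algebra_simps)

lemma gp_sub: "gp i w \<ge> gp i v + dg i v \<bullet> (w - v)"
proof (cases "g i v > 0")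
  case True
  then show ?thesis using dg_sub[OF True, of w] unfolding gp_def by simp
next
  case False then show ?thesis using dg_zero[of i v] unfolding gp_def by simp
qed

lemma gp_nonneg: "gp i w \<ge> 0" unfolding gp_def by simp

lemma gp_lip: "\<bar>gp i v - gp i w\<bar> \<le> K * norm (v - w)"
proof -
  have "gp i v - gp i w \<le> dg i v \<bullet> (v - w)" using gp_sub[of i v w] by (simp add: inner_diff_right)
  also have "\<dots> \<le> norm (dg i v) * norm (v - w)" by (rule Cauchy_Schwarz_ineq2[THEN order_trans[OF abs_ge_self]])
  also have "\<dots> \<le> K * norm (v - w)" using dgK by (intro mult_right_mono) auto
  finally have 1: "gp i v - gp i w \<le> K * norm (v - w)" .
  have "gp i w - gp i v \<le> dg i w \<bullet> (w - v)" using gp_sub[of i w v] by (simp add: inner_diff_right)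
  also have "\<dots> \<le> norm (dg i w) * norm (w - v)" by (rule Cauchy_Schwarz_ineq2[THEN order_trans[OF abs_ge_self]])
  also have "\<dots> \<le> K * norm (v - w)" using dgK by (simp add: norm_minus_commute mult_right_mono)
  finally show ?thesis using 1 by simp
qed

lemma gp_cont: "continuous_on UNIV (gp i)"
  unfolding gp_def by (intro continuous_intros g_cont)

lemma sol_gp: "sol w \<Longrightarrow> gp i w = 0" unfolding sol_def gp_def by simp

lemma one_step:
  assumes s: "sol w"
  shows "(norm (x (Suc t) i - w))\<^sup>2 \<le> (norm (y t i - w))\<^sup>2 - \<alpha> t * (d t i)\<^sup>2
           - 2 * \<beta> t * gp i (y t i) + (\<beta> t)\<^sup>2 * K\<^sup>2"
proof -
  let ?a = "\<xi> t i - w" and ?b = "\<xi> t i - pr t i" and ?al = "\<alpha> t"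
  have wX: "w \<in> X i" using s unfolding sol_def by simp
  have dot: "(\<xi> t i - pr t i) \<bullet> (w - pr t i) \<le> 0"
    unfolding pr_def by (rule closest_point_dot[OF X_convex X_closed wX])
  have "x (Suc t) i - w = ?a - ?al *\<^sub>R ?b" using dyn' by simp
  then have "(norm (x (Suc t) i - w))\<^sup>2 = (norm ?a)\<^sup>2 - 2 * ?al * (?a \<bullet> ?b) + ?al\<^sup>2 * (norm ?b)\<^sup>2"
    by (simp only: norm_sub_scale_sq)
  moreover have "?a \<bullet> ?b = (norm ?b)\<^sup>2 - (?b \<bullet> (w - pr t i))"
    unfolding power2_norm_eq_inner by (simp add: inner_diff_left inner_diff_right inner_commute algebra_simps)
  moreover have "\<And>A B P Q L (al::real). L = A - 2*al*P + al\<^sup>2*B \<Longrightarrow> P = B - Q \<Longrightarrow> L = A - (2*al - al\<^sup>2)*B + 2*al*Q"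
    by (simp add: algebra_simps)
  ultimately have "(norm (x (Suc t) i - w))\<^sup>2 = (norm ?a)\<^sup>2 - (2 * ?al - ?al\<^sup>2) * (norm ?b)\<^sup>2 + 2 * ?al * (?b \<bullet> (w - pr t i))"
    by blast
  also have "\<dots> \<le> (norm ?a)\<^sup>2 - ?al * (norm ?b)\<^sup>2"
  proof -
    have "2 * ?al * (?b \<bullet> (w - pr t i)) \<le> 0" using \<alpha>01[of t] dot by (simp add: mult_nonneg_nonpos)
    moreover have "(2 * ?al - ?al\<^sup>2) * (norm ?b)\<^sup>2 \<ge> ?al * (norm ?b)\<^sup>2"
      using \<alpha>01[of t] by (intro mult_right_mono) (auto simp: power2_eq_square mult_left_le_one_le)
    ultimately show ?thesis by linarith
  qed
  also have "(norm ?a)\<^sup>2 \<le> (norm (y t i - w))\<^sup>2 - 2 * \<beta> t * gp i (y t i) + (\<beta> t)\<^sup>2 * K\<^sup>2"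
  proof -
    let ?v = "y t i - w" and ?g = "dg i (y t i)"
    have "?a = ?v - \<beta> t *\<^sub>R ?g" unfolding \<xi>_def by simp
    then have e: "(norm ?a)\<^sup>2 = (norm ?v)\<^sup>2 - 2 * \<beta> t * (?g \<bullet> ?v) + (\<beta> t)\<^sup>2 * (norm ?g)\<^sup>2"
      by (simp only: norm_sub_scale_sq inner_commute[of ?v ?g])
    have "?g \<bullet> ?v \<ge> gp i (y t i)" using gp_sub[of i "y t i" w] sol_gp[OF s, of i]
      by (simp add: inner_diff_right)
    then have "2 * \<beta> t * (?g \<bullet> ?v) \<ge> 2 * \<beta> t * gp i (y t i)" using \<beta>0[of t] by (intro mult_left_mono) auto
    moreover have "(\<beta> t)\<^sup>2 * (norm ?g)\<^sup>2 \<le> (\<beta> t)\<^sup>2 * K\<^sup>2" using dgK[of i "y t i"] by (intro mult_left_mono power_mono) auto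
    ultimately show ?thesis using e by linarith
  qed
  finally show ?thesis unfolding d_def by linarith
qed

lemma y_minus: "y t i - w = (\<Sum>j\<in>UNIV. W i j *\<^sub>R (x t j - w))"
proof -
  have "(\<Sum>j\<in>UNIV. W i j *\<^sub>R w) = w" by (simp add: scaleR_sum_left[symmetric] W1)
  then show ?thesis unfolding y_def by (simp add: scaleR_diff_right sum_subtractf)
qed

lemma avg_y: "(\<Sum>i\<in>UNIV. \<pi> i * (norm (y t i - w))\<^sup>2) \<le> V w t"
proof -
  have "(\<Sum>i\<in>UNIV. \<pi> i * (norm (y t i - w))\<^sup>2) \<le> (\<Sum>i\<in>UNIV. \<pi> i * (\<Sum>j\<in>UNIV. W i j * (norm (x t j - w))\<^sup>2))"
    unfolding y_minus using \<pi>_pos W0 W1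
    by (intro sum_mono mult_left_mono norm_sum_sq_le) (auto intro: less_imp_le)
  also have "\<dots> = (\<Sum>j\<in>UNIV. (\<Sum>i\<in>UNIV. \<pi> i * W i j) * (norm (x t j - w))\<^sup>2)"
    by (simp only: sum_distrib_left sum_distrib_right mult.assoc mult.left_commute[of "\<pi> _"]) (rule sum.swap)
  also have "\<dots> = V w t" unfolding V_def \<pi>_stat ..
  finally show ?thesis .
qed

lemma V_step: "sol w \<Longrightarrow> V w (Suc t) \<le> V w t - c t + (\<beta> t)\<^sup>2 * K\<^sup>2"
proof -
  assume s: "sol w"
  have "V w (Suc t) \<le> (\<Sum>i\<in>UNIV. \<pi> i * ((norm (y t i - w))\<^sup>2 - (\<alpha> t * (d t i)\<^sup>2 + 2 * \<beta> t * gp i (y t i)) + (\<beta> t)\<^sup>2 * K\<^sup>2))"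
    unfolding V_def using one_step[OF s] \<pi>_pos
    by (intro sum_mono mult_left_mono) (auto simp: algebra_simps intro: less_imp_le)
  also have "\<dots> = (\<Sum>i\<in>UNIV. \<pi> i * (norm (y t i - w))\<^sup>2) - c t + (\<beta> t)\<^sup>2 * K\<^sup>2"
    unfolding c_def by (simp add: algebra_simps sum_subtractf sum.distrib sum_distrib_right[symmetric] \<pi>_sum)
  also have "\<dots> \<le> V w t - c t + (\<beta> t)\<^sup>2 * K\<^sup>2" using avg_y by simp
  finally show ?thesis .
qed

lemma c_nonneg: "c t \<ge> 0"
  unfolding c_def using \<pi>_pos \<alpha>01 \<beta>0 gp_nonneg
  by (intro sum_nonneg mult_nonneg_nonneg add_nonneg_nonneg) (auto intro: less_imp_le)

lemma V_nonneg: "V w t \<ge> 0" unfolding V_def using \<pi>_nonneg by (intro sum_nonneg mult_nonneg_nonneg) auto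

lemma bsK: "summable (\<lambda>t. (\<beta> t)\<^sup>2 * K\<^sup>2)" using \<beta>_sq by (rule summable_mult2)

lemma V_conv: assumes "sol w" shows "convergent (V w)"
  using RS_lemma(1)[of "V w" c "\<lambda>t. (\<beta> t)\<^sup>2 * K\<^sup>2", OF V_nonneg c_nonneg _ bsK V_step[OF assms]] by simp

lemma sol_x0: "sol x0" unfolding sol_def using x0_sol by simp

lemma c_summable: "summable c"
  using RS_lemma(2)[of "V x0" c "\<lambda>t. (\<beta> t)\<^sup>2 * K\<^sup>2", OF V_nonneg c_nonneg _ bsK V_step[OF sol_x0]] by simp

lemma \<pi>min: "\<exists>p>0. \<forall>i. \<pi> i \<ge> p"
proof -
  have "Min (range \<pi>) > 0" using \<pi>_pos by (subst Min_gr_iff) auto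
  moreover have "\<pi> i \<ge> Min (range \<pi>)" for i by (rule Min_le) auto
  ultimately show ?thesis by blast
qed

lemma norm_le_V: "(norm (x t i - w))\<^sup>2 \<le> V w t / \<pi> i"
proof -
  have "\<pi> i * (norm (x t i - w))\<^sup>2 \<le> V w t" unfolding V_def
    using \<pi>_nonneg by (intro member_le_sum[of i UNIV "\<lambda>i. \<pi> i * (norm (x t i - w))\<^sup>2"] mult_nonneg_nonneg) auto
  then show ?thesis using \<pi>_pos[of i] by (simp add: field_simps)
qed

lemma x_bounded: "\<exists>R. \<forall>t i. norm (x t i - x0) \<le> R"
proof -
  have "sol x0" unfolding sol_def using x0_sol by simp
  then have "convergent (V x0)" by (rule V_conv)
  then have "Bseq (V x0)" by (rule convergent_imp_Bseq)
  then obtain B where B0: "\<And>t. \<bar>V x0 t\<bar> \<le> B" by (auto simp: Bseq_def)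
  have B: "V x0 t \<le> B" for t using B0[of t] by simp
  obtain p where p: "p > 0" "\<And>i. \<pi> i \<ge> p" using \<pi>min by blast
  have "(norm (x t i - x0))\<^sup>2 \<le> B / p" for t i
  proof -
    have "(norm (x t i - x0))\<^sup>2 \<le> V x0 t / \<pi> i" by (rule norm_le_V)
    also have "\<dots> \<le> B / \<pi> i" using B[of t] \<pi>_pos[of i] by (simp add: divide_right_mono)
    also have "\<dots> \<le> B / p" using p \<pi>_pos[of i] B[of t] V_nonneg[of x0 t]
      by (intro divide_left_mono) auto
    finally show ?thesis .
  qed
  then have "norm (x t i - x0) \<le> sqrt (B / p)" for t i by (simp add: real_le_rsqrt)
  then show ?thesis by blast
qed


definition "\<phi> t i = x (Suc t) i - y t i"
definition "e t = (\<Sum>i\<in>UNIV. \<beta> t * K + \<alpha> t * d t i)"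
definition "D t = Max (range (\<lambda>p. norm (x t (fst p) - x t (snd p))))"

lemma phi_bound: "norm (\<phi> t i) \<le> \<beta> t * K + \<alpha> t * d t i"
proof -
  have "\<phi> t i = - (\<beta> t *\<^sub>R dg i (y t i)) - \<alpha> t *\<^sub>R (\<xi> t i - pr t i)"
    unfolding \<phi>_def dyn' by (simp add: \<xi>_def)
  also have "norm \<dots> \<le> \<beta> t * K + \<alpha> t * d t i"
    using dgK[of i "y t i"] \<beta>0[of t] \<alpha>01[of t] unfolding d_def
    by (intro order_trans[OF norm_triangle_ineq4] add_mono) (auto intro: mult_left_mono)
  finally show ?thesis .
qed

lemma phi_e: "norm (\<phi> t i) \<le> e t"
proof -
  have "\<beta> t * K + \<alpha> t * d t i \<le> e t" unfolding e_def
    using \<beta>0 \<alpha>01 K0 by (intro member_le_sum[of i UNIV "\<lambda>i. \<beta> t * K + \<alpha> t * d t i"])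
      (auto simp: d_def intro!: add_nonneg_nonneg mult_nonneg_nonneg)
  then show ?thesis using phi_bound[of t i] by simp
qed

lemma sqrt_null: fixes f :: "nat \<Rightarrow> real" assumes "\<And>t. f t \<ge> 0" "(\<lambda>t. (f t)\<^sup>2) \<longlonglongrightarrow> 0" shows "f \<longlonglongrightarrow> 0"
proof -
  have "(\<lambda>t. sqrt ((f t)\<^sup>2)) \<longlonglongrightarrow> sqrt 0" by (intro tendsto_real_sqrt assms)
  then show ?thesis using assms(1) by simp
qed

lemma beta_null: "\<beta> \<longlonglongrightarrow> 0"
  using sqrt_null[OF \<beta>0 summable_LIMSEQ_zero[OF \<beta>_sq]] .

lemma c_null: "c \<longlonglongrightarrow> 0" using summable_LIMSEQ_zero[OF c_summable] .

lemma c_ge: "\<pi> i * (\<alpha> t * (d t i)\<^sup>2) \<le> c t"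
proof -
  have "\<pi> i * (\<alpha> t * (d t i)\<^sup>2) \<le> \<pi> i * (\<alpha> t * (d t i)\<^sup>2 + 2 * \<beta> t * gp i (y t i))"
    using \<pi>_pos[of i] \<beta>0[of t] gp_nonneg[of i] by (intro mult_left_mono) auto
  also have "\<dots> \<le> c t" unfolding c_def using \<pi>_nonneg \<alpha>01 \<beta>0 gp_nonneg
    by (intro member_le_sum[of i UNIV "\<lambda>i. \<pi> i * (\<alpha> t * (d t i)\<^sup>2 + 2 * \<beta> t * gp i (y t i))"]
        mult_nonneg_nonneg add_nonneg_nonneg) auto
  finally show ?thesis .
qed

lemma ad_null: "(\<lambda>t. \<alpha> t * d t i) \<longlonglongrightarrow> 0"
proof (rule sqrt_null)
  show "\<alpha> t * d t i \<ge> 0" for t using \<alpha>01 by (simp add: d_def)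
  show "(\<lambda>t. (\<alpha> t * d t i)\<^sup>2) \<longlonglongrightarrow> 0"
  proof (rule tendsto_sandwich[where f="\<lambda>_. 0" and h="\<lambda>t. c t / \<pi> i"])
    show "\<forall>\<^sub>F n in sequentially. 0 \<le> (\<alpha> n * d n i)\<^sup>2" by simp
    have "(\<alpha> t * d t i)\<^sup>2 \<le> c t / \<pi> i" for t
    proof -
      have "(\<alpha> t * d t i)\<^sup>2 = \<alpha> t * (\<alpha> t * (d t i)\<^sup>2)" by (simp add: power2_eq_square)
      also have "\<dots> \<le> \<alpha> t * (d t i)\<^sup>2" using \<alpha>01[of t] by (intro mult_left_le_one_le) auto
      also have "\<dots> \<le> c t / \<pi> i" using c_ge[of i t] \<pi>_pos[of i] by (simp add: field_simps)
      finally show ?thesis .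
    qed
    then show "\<forall>\<^sub>F n in sequentially. (\<alpha> n * d n i)\<^sup>2 \<le> c n / \<pi> i" by simp
    show "(\<lambda>t. c t / \<pi> i) \<longlonglongrightarrow> 0" using tendsto_divide_zero[OF c_null] .
  qed simp
qed

lemma e_null: "e \<longlonglongrightarrow> 0"
proof -
  have "(\<lambda>t. \<Sum>i\<in>UNIV. \<beta> t * K + \<alpha> t * d t i) \<longlonglongrightarrow> (\<Sum>i\<in>(UNIV::'n set). 0 * K + 0)"
    by (intro tendsto_sum tendsto_add tendsto_mult beta_null ad_null tendsto_const)
  then show ?thesis unfolding e_def by simp
qed

lemma D_ge: "norm (x t i - x t k) \<le> D t"
  unfolding D_def by (rule Max_ge) (auto intro: image_eqI[of _ _ "(i,k)"])

lemma D_nonneg: "D t \<ge> 0" using D_ge[of t undefined undefined] by simp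

lemma x_dyn: "x (Suc t) i = (\<Sum>j\<in>UNIV. W i j *\<^sub>R x t j) + \<phi> t i"
  unfolding \<phi>_def y_def by simp

lemma D_null: "D \<longlonglongrightarrow> 0"
proof -
  obtain N :: nat and \<delta> :: real where N: "N > 0" and \<delta>: "\<delta> > 0" "\<And>i j. mpow W N i j \<ge> \<delta>" using Wpos by blast
  have \<delta>1: "\<delta> \<le> 1"
  proof -
    have "mpow W N undefined undefined \<le> (\<Sum>j\<in>UNIV. mpow W N undefined j)"
      using mpow_nonneg[OF W0] by (intro member_le_sum) auto
    moreover have "(\<Sum>j\<in>UNIV. mpow W N undefined j) = 1" by (rule mpow_rows[OF W1])
    ultimately show ?thesis using \<delta>(2)[of undefined undefined] by simp
  qed
  obtain R where R: "\<And>t i. norm (x t i - x0) \<le> R" using x_bounded by blast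
  have DR: "D t \<le> 2 * R" for t
    unfolding D_def
  proof (subst Max_le_iff, simp, simp, clarify)
    fix i k
    have "norm (x t i - x t k) \<le> norm (x t i - x0) + norm (x t k - x0)"
      by (rule order_trans[OF _ norm_triangle_ineq4]) simp
    then show "norm (x t i - x t k) \<le> 2 * R" using R[of t i] R[of t k] by simp
  qed
  have rec: "D (t + N) \<le> (1 - \<delta>\<^sup>2) * D t + 2 * (\<Sum>s<N. e (t + s))" for t
    unfolding D_def[of "t + N"]
  proof (subst Max_le_iff, simp, simp, clarify)
    fix i k
    let ?P = "\<lambda>i. (\<Sum>j\<in>UNIV. mpow W N i j *\<^sub>R x t j)"
    have r: "norm (x (t + N) i - ?P i) \<le> (\<Sum>s<N. e (t + s))" for i
      by (rule mpow_repr[where W=W and x=x and \<phi>=\<phi> and e=e, OF W0 W1 x_dyn phi_e])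
    have sd: "norm (?P i - ?P k) \<le> (1 - \<delta>\<^sup>2) * D t"
      by (rule stoch_diff[OF mpow_nonneg[OF W0] mpow_rows[OF W1] \<delta>(2)]) (use \<delta> D_ge in auto)
    have E: "norm (x (t + N) i - x (t + N) k) = norm ((x (t + N) i - ?P i) - (x (t + N) k - ?P k) + (?P i - ?P k))" by simp
    have "norm (x (t + N) i - x (t + N) k) \<le> norm (x (t + N) i - ?P i) + norm (x (t + N) k - ?P k) + norm (?P i - ?P k)"
      using E norm_triangle_ineq[of "x (t + N) i - ?P i - (x (t + N) k - ?P k)" "?P i - ?P k"]
        norm_triangle_ineq4[of "x (t + N) i - ?P i" "x (t + N) k - ?P k"] by linarith
    then show "norm (x (t + N) i - x (t + N) k) \<le> (1 - \<delta>\<^sup>2) * D t + 2 * (\<Sum>s<N. e (t + s))"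
      using r[of i] r[of k] sd by simp
  qed
  have bnull: "(\<lambda>t. 2 * (\<Sum>s<N. e (t + s))) \<longlonglongrightarrow> 0"
  proof -
    have "(\<lambda>t. 2 * (\<Sum>s<N. e (t + s))) \<longlonglongrightarrow> 2 * (\<Sum>s<N. 0)"
      by (intro tendsto_mult tendsto_const tendsto_sum) (simp add: LIMSEQ_ignore_initial_segment[OF e_null, simplified add.commute])
    then show ?thesis by simp
  qed
  show ?thesis
    by (rule null_from_recursion[OF D_nonneg DR N _ _ rec bnull])
       (use \<delta> \<delta>1 mult_le_one[of \<delta> \<delta>] in \<open>auto simp: power2_eq_square\<close>)
qed


lemma convex_comb_dist:
  fixes w :: "'n \<Rightarrow> real" and v :: "'n \<Rightarrow> 'v"
  assumes "\<And>j. w j \<ge> 0" "(\<Sum>j\<in>UNIV. w j) = 1" "\<And>j. norm (v j - u) \<le> B"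
  shows "norm ((\<Sum>j\<in>UNIV. w j *\<^sub>R v j) - u) \<le> B"
proof -
  have "(\<Sum>j\<in>UNIV. w j *\<^sub>R u) = u" by (simp add: scaleR_sum_left[symmetric] assms(2))
  then have "(\<Sum>j\<in>UNIV. w j *\<^sub>R v j) - u = (\<Sum>j\<in>UNIV. w j *\<^sub>R (v j - u))"
    by (simp add: scaleR_diff_right sum_subtractf)
  also have "norm \<dots> \<le> (\<Sum>j\<in>UNIV. w j * B)"
    by (intro order_trans[OF norm_sum] sum_mono) (use assms in \<open>auto intro: mult_left_mono\<close>)
  also have "\<dots> = B" by (simp add: sum_distrib_right[symmetric] assms(2))
  finally show ?thesis .
qed

definition "z t = (\<Sum>i\<in>UNIV. \<pi> i *\<^sub>R x t i)"
definition "stp t = \<beta> t * K + (\<Sum>i\<in>UNIV. \<pi> i * (\<alpha> t * d t i))"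
definition "f w = (\<Sum>i\<in>UNIV. \<pi> i * gp i w)"
definition "q w = (\<Sum>i\<in>UNIV. \<pi> i * infdist w (X i))"
definition "F t = (\<Sum>i\<in>UNIV. \<pi> i * gp i (y t i))"
definition "G2 t = (\<Sum>i\<in>UNIV. \<pi> i * (d t i)\<^sup>2)"

lemma z_x: "norm (z t - x t i) \<le> D t"
  unfolding z_def by (rule convex_comb_dist[OF \<pi>_nonneg \<pi>_sum D_ge])

lemma y_x: "norm (y t i - x t i) \<le> D t"
  unfolding y_def by (rule convex_comb_dist[OF W0 W1 D_ge])

lemma y_z: "norm (y t i - z t) \<le> 2 * D t"
proof -
  have "norm (y t i - z t) \<le> norm (y t i - x t i) + norm (z t - x t i)"
    by (rule order_trans[OF _ norm_triangle_ineq4]) simp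
  then show ?thesis using y_x[of t i] z_x[of t i] by simp
qed

lemma z_bound: assumes "\<And>t i. norm (x t i - x0) \<le> R" shows "norm (z t - x0) \<le> R"
  unfolding z_def by (rule convex_comb_dist[OF \<pi>_nonneg \<pi>_sum assms])

lemma z_step: "norm (z (Suc t) - z t) \<le> stp t"
proof -
  have sy: "(\<Sum>i\<in>UNIV. \<pi> i *\<^sub>R y t i) = z t"
  proof -
    have "(\<Sum>i\<in>UNIV. \<pi> i *\<^sub>R y t i) = (\<Sum>j\<in>UNIV. (\<Sum>i\<in>UNIV. \<pi> i * W i j) *\<^sub>R x t j)"
      unfolding y_def by (simp only: scaleR_sum_right scaleR_sum_left scaleR_scaleR) (rule sum.swap)
    then show ?thesis unfolding \<pi>_stat z_def .
  qed
  have "z (Suc t) - z t = (\<Sum>i\<in>UNIV. \<pi> i *\<^sub>R \<phi> t i)"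
  proof -
    have "z (Suc t) = (\<Sum>i\<in>UNIV. \<pi> i *\<^sub>R y t i) + (\<Sum>i\<in>UNIV. \<pi> i *\<^sub>R \<phi> t i)"
      unfolding z_def \<phi>_def by (simp add: scaleR_diff_right sum.distrib[symmetric])
    then show ?thesis using sy by simp
  qed
  also have "norm \<dots> \<le> (\<Sum>i\<in>UNIV. \<pi> i * (\<beta> t * K + \<alpha> t * d t i))"
    by (intro order_trans[OF norm_sum] sum_mono) (use \<pi>_nonneg phi_bound in \<open>auto intro: mult_left_mono\<close>)
  also have "\<dots> = stp t" unfolding stp_def
    by (simp add: distrib_left sum.distrib sum_distrib_right[symmetric] \<pi>_sum)
  finally show ?thesis .
qed

lemma stp_null: "stp \<longlonglongrightarrow> 0"
proof -
  have "stp \<longlonglongrightarrow> 0 * K + (\<Sum>i\<in>(UNIV::'n set). \<pi> i * 0)" unfolding stp_def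
    by (intro tendsto_add tendsto_mult tendsto_sum beta_null ad_null tendsto_const)
  then show ?thesis by simp
qed

lemma d_infdist: "d t i = infdist (\<xi> t i) (X i)"
  unfolding d_def pr_def infdist_eq_setdist setdist_closest_point[OF X_closed X_ne] dist_norm ..

lemma f_err: "\<bar>f (z t) - F t\<bar> \<le> 2 * K * D t"
proof -
  have "\<bar>f (z t) - F t\<bar> = \<bar>\<Sum>i\<in>UNIV. \<pi> i * (gp i (z t) - gp i (y t i))\<bar>"
    unfolding f_def F_def by (simp add: sum_subtractf right_diff_distrib)
  also have "\<dots> \<le> (\<Sum>i\<in>UNIV. \<pi> i * (2 * K * D t))"
  proof (intro order_trans[OF sum_abs] sum_mono)
    fix i
    have "\<bar>gp i (z t) - gp i (y t i)\<bar> \<le> K * norm (z t - y t i)" by (rule gp_lip)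
    also have "\<dots> \<le> K * (2 * D t)" using y_z[of t i] K0 by (intro mult_left_mono) (auto simp: norm_minus_commute)
    finally show "\<bar>\<pi> i * (gp i (z t) - gp i (y t i))\<bar> \<le> \<pi> i * (2 * K * D t)"
      using \<pi>_nonneg[of i] by (simp add: abs_mult mult_left_mono)
  qed
  also have "\<dots> = 2 * K * D t" by (simp add: sum_distrib_right[symmetric] \<pi>_sum)
  finally show ?thesis .
qed

lemma q_err: "\<bar>q (z t) - (\<Sum>i\<in>UNIV. \<pi> i * d t i)\<bar> \<le> 2 * D t + \<beta> t * K"
proof -
  have "\<bar>q (z t) - (\<Sum>i\<in>UNIV. \<pi> i * d t i)\<bar> = \<bar>\<Sum>i\<in>UNIV. \<pi> i * (infdist (z t) (X i) - infdist (\<xi> t i) (X i))\<bar>"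
    unfolding q_def d_infdist by (simp add: sum_subtractf right_diff_distrib)
  also have "\<dots> \<le> (\<Sum>i\<in>UNIV. \<pi> i * (2 * D t + \<beta> t * K))"
  proof (intro order_trans[OF sum_abs] sum_mono)
    fix i
    have "\<bar>infdist (z t) (X i) - infdist (\<xi> t i) (X i)\<bar> \<le> dist (z t) (\<xi> t i)" by (rule infdist_triangle_abs)
    also have "\<dots> = norm ((y t i - z t) - \<beta> t *\<^sub>R dg i (y t i))" unfolding \<xi>_def dist_norm
      by (simp add: norm_minus_commute algebra_simps)
    also have "\<dots> \<le> norm (y t i - z t) + norm (\<beta> t *\<^sub>R dg i (y t i))" by (rule norm_triangle_ineq4)
    also have "\<dots> \<le> 2 * D t + \<beta> t * K" using y_z[of t i] dgK[of i "y t i"] \<beta>0[of t]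
      by (intro add_mono) (auto intro: mult_left_mono)
    finally show "\<bar>\<pi> i * (infdist (z t) (X i) - infdist (\<xi> t i) (X i))\<bar> \<le> \<pi> i * (2 * D t + \<beta> t * K)"
      using \<pi>_nonneg[of i] by (simp add: abs_mult mult_left_mono)
  qed
  also have "\<dots> = 2 * D t + \<beta> t * K" by (simp add: sum_distrib_right[symmetric] \<pi>_sum)
  finally show ?thesis .
qed

lemma c_split: "c t = \<alpha> t * G2 t + 2 * (\<beta> t * F t)"
  unfolding c_def G2_def F_def by (simp add: algebra_simps sum.distrib sum_distrib_left)

lemma F_nonneg: "F t \<ge> 0" unfolding F_def using \<pi>_nonneg gp_nonneg by (intro sum_nonneg mult_nonneg_nonneg) auto
lemma G2_nonneg: "G2 t \<ge> 0" unfolding G2_def using \<pi>_nonneg by (intro sum_nonneg mult_nonneg_nonneg) auto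
lemma f_nonneg: "f w \<ge> 0" unfolding f_def using \<pi>_nonneg gp_nonneg by (intro sum_nonneg mult_nonneg_nonneg) auto
lemma q_nonneg: "q w \<ge> 0" unfolding q_def using \<pi>_nonneg by (intro sum_nonneg mult_nonneg_nonneg) (auto simp: infdist_nonneg)

lemma aG_summable: "summable (\<lambda>t. \<alpha> t * G2 t)"
  by (rule summable_comparison_test'[OF c_summable, of 0])
     (use c_split \<alpha>01 G2_nonneg \<beta>0 F_nonneg in \<open>auto intro!: mult_nonneg_nonneg\<close>)

lemma bF_summable: "summable (\<lambda>t. \<beta> t * F t)"
  by (rule summable_comparison_test'[OF c_summable, of 0])
     (use c_split \<alpha>01 G2_nonneg \<beta>0 F_nonneg in \<open>auto intro!: mult_nonneg_nonneg\<close>)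

lemma f_cont: "continuous_on UNIV f"
  unfolding f_def by (intro continuous_intros gp_cont[THEN continuous_on_subset]) auto

lemma q_cont: "continuous_on UNIV q"
  unfolding q_def by (intro continuous_intros continuous_on_infdist)

lemma no_div:
  fixes a b :: "nat \<Rightarrow> real"
  assumes div: "filterlim (\<lambda>N. \<Sum>t<N. a t) at_top sequentially" and a0: "\<And>t. a t \<ge> 0"
    and bs: "summable b" and le: "\<And>t. t \<ge> T \<Longrightarrow> a t \<le> b t"
  shows False
proof -
  have sa: "summable a" by (rule summable_comparison_test'[OF bs, of T]) (use a0 le in auto)
  have "\<forall>\<^sub>F N in sequentially. suminf a + 1 \<le> (\<Sum>t<N. a t)" using div by (simp add: filterlim_at_top)
  then obtain N where "suminf a + 1 \<le> (\<Sum>t<N. a t)" by (auto simp: eventually_sequentially)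
  moreover have "(\<Sum>t<N. a t) \<le> suminf a" using sum_le_suminf[OF sa, of "{..<N}"] a0 by auto
  ultimately show False by simp
qed


lemma stp_nonneg: "stp t \<ge> 0" using z_step[of t] norm_ge_zero order_trans by blast

lemma d_le: "d t i \<le> 1 + (d t i)\<^sup>2"
proof -
  have "0 \<le> (d t i - 1)\<^sup>2" by simp
  then have "2 * d t i \<le> (d t i)\<^sup>2 + 1" by (simp add: power2_eq_square algebra_simps)
  moreover have "d t i \<ge> 0" by (simp add: d_def)
  ultimately show ?thesis by (simp add: power2_eq_square)
qed

lemma liminf_zero:
  assumes r: "r > 0" shows "\<exists>t\<ge>T. f (z t) + q (z t) < r"
proof (rule ccontr)
  assume "\<not> ?thesis"
  then have H0: "\<And>t. t \<ge> T \<Longrightarrow> f (z t) + q (z t) \<ge> r" by (auto simp: not_less)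
  define \<epsilon> where "\<epsilon> = r / 4"
  have \<epsilon>: "\<epsilon> > 0" using r by (simp add: \<epsilon>_def)
  have H: "\<And>t. t \<ge> T \<Longrightarrow> f (z t) + q (z t) \<ge> 4 * \<epsilon>" using H0 by (simp add: \<epsilon>_def)
  obtain p where p: "p > 0" "\<And>i. \<pi> i \<ge> p" using \<pi>min by blast
  obtain R where R: "\<And>t i. norm (x t i - x0) \<le> R" using x_bounded by blast
  have e1: "(\<lambda>t. 2 * K * D t) \<longlonglongrightarrow> 0" using tendsto_mult_right_zero[OF D_null] by simp
  have e2: "(\<lambda>t. 2 * D t + \<beta> t * K) \<longlonglongrightarrow> 0"
    using tendsto_add[OF tendsto_mult_right_zero[OF D_null, of 2] tendsto_mult_left_zero[OF beta_null, of K]] by simp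
  have "eventually (\<lambda>t. 2 * K * D t < \<epsilon>/2 \<and> 2 * D t + \<beta> t * K < \<epsilon>/2 \<and> t \<ge> T) sequentially"
    by (intro eventually_conj order_tendstoD(2)[OF e1] order_tendstoD(2)[OF e2] eventually_ge_at_top) (use \<epsilon> in auto)
  then obtain T1 where T1: "\<And>t. t \<ge> T1 \<Longrightarrow> 2 * K * D t < \<epsilon>/2 \<and> 2 * D t + \<beta> t * K < \<epsilon>/2 \<and> t \<ge> T"
    by (auto simp: eventually_sequentially)
  have fF: "\<beta> t \<le> (2/\<epsilon>) * (\<beta> t * F t)" if "t \<ge> T1" "f (z t) > \<epsilon>" for t
  proof -
    have "f (z t) - F t \<le> 2 * K * D t" using f_err[of t] by (simp add: abs_le_iff)
    then have "F t \<ge> \<epsilon>/2" using T1[OF that(1)] that(2) by linarith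
    then have "(2/\<epsilon>) * (\<beta> t * F t) \<ge> (2/\<epsilon>) * (\<beta> t * (\<epsilon>/2))" using \<beta>0[of t] \<epsilon>
      by (intro mult_left_mono) auto
    also have "(2/\<epsilon>) * (\<beta> t * (\<epsilon>/2)) = \<beta> t" using \<epsilon> by simp
    finally show ?thesis .
  qed
  have qG: "\<alpha> t \<le> (4/(p*\<epsilon>\<^sup>2)) * (\<alpha> t * G2 t)" if "t \<ge> T1" "q (z t) > \<epsilon>" for t
  proof -
    have "q (z t) - (\<Sum>i\<in>UNIV. \<pi> i * d t i) \<le> 2 * D t + \<beta> t * K" using q_err[of t] by (simp add: abs_le_iff)
    then have sd: "(\<Sum>i\<in>UNIV. \<pi> i * d t i) \<ge> \<epsilon>/2" using T1[OF that(1)] that(2) by linarith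
    obtain i where i: "d t i \<ge> \<epsilon>/2"
    proof (rule ccontr)
      assume "\<not> thesis"
      then have lt: "d t i < \<epsilon>/2" for i using that by (meson not_le)
      have "(\<Sum>i\<in>UNIV. \<pi> i * d t i) < (\<Sum>i\<in>UNIV. \<pi> i * (\<epsilon>/2))"
        by (rule sum_strict_mono) (use lt \<pi>_pos in auto)
      also have "\<dots> = \<epsilon>/2" by (simp only: sum_distrib_right[symmetric] \<pi>_sum mult_1_left)
      finally show False using sd by simp
    qed
    have "\<pi> i * (d t i)\<^sup>2 \<le> G2 t" unfolding G2_def using \<pi>_nonneg
      by (intro member_le_sum[of i UNIV "\<lambda>i. \<pi> i * (d t i)\<^sup>2"] mult_nonneg_nonneg) auto
    moreover have "p * (\<epsilon>/2)\<^sup>2 \<le> \<pi> i * (d t i)\<^sup>2" using p i \<epsilon> \<pi>_nonneg[of i]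
      by (intro mult_mono power_mono) auto
    ultimately have G: "G2 t \<ge> p * \<epsilon>\<^sup>2 / 4" by (simp add: power2_eq_square)
    have "(4/(p*\<epsilon>\<^sup>2)) * (\<alpha> t * G2 t) \<ge> (4/(p*\<epsilon>\<^sup>2)) * (\<alpha> t * (p * \<epsilon>\<^sup>2 / 4))"
      using G \<alpha>01[of t] p \<epsilon> by (intro mult_left_mono) auto
    also have "(4/(p*\<epsilon>\<^sup>2)) * (\<alpha> t * (p * \<epsilon>\<^sup>2 / 4)) = \<alpha> t" using p \<epsilon> by simp
    finally show ?thesis .
  qed
  have v1: "\<exists>t\<ge>T'. f (z t) \<le> \<epsilon>" for T'
  proof (rule ccontr)
    assume "\<not> ?thesis" then have gt: "\<And>t. t \<ge> T' \<Longrightarrow> f (z t) > \<epsilon>" by auto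
    show False
      by (rule no_div[OF \<beta>_div \<beta>0 summable_mult[OF bF_summable, of "2/\<epsilon>"], of "max T' T1"])
         (use fF gt in auto)
  qed
  have v2: "\<exists>t\<ge>T'. q (z t) \<le> \<epsilon>" for T'
  proof (rule ccontr)
    assume "\<not> ?thesis" then have gt: "\<And>t. t \<ge> T' \<Longrightarrow> q (z t) > \<epsilon>" by auto
    show False
      by (rule no_div[OF \<alpha>_div _ summable_mult[OF aG_summable, of "4/(p*\<epsilon>\<^sup>2)"], of "max T' T1"])
         (use qG gt \<alpha>01 in auto)
  qed
  define m where "m t = (if f (z t) > \<epsilon> \<and> q (z t) > \<epsilon> then stp t else 0)" for t
  have m0: "m t \<ge> 0" for t unfolding m_def using stp_nonneg by simp
  have ms: "summable m"
  proof (rule summable_comparison_test'[where N=T1])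
    show "summable (\<lambda>t. (K * (2/\<epsilon>)) * (\<beta> t * F t) + (4/(p*\<epsilon>\<^sup>2) + 1) * (\<alpha> t * G2 t))"
      by (intro summable_add summable_mult bF_summable aG_summable)
    fix t assume t: "t \<ge> T1"
    show "norm (m t) \<le> (K * (2/\<epsilon>)) * (\<beta> t * F t) + (4/(p*\<epsilon>\<^sup>2) + 1) * (\<alpha> t * G2 t)"
    proof (cases "f (z t) > \<epsilon> \<and> q (z t) > \<epsilon>")
      case True
      have "(\<Sum>i\<in>UNIV. \<pi> i * (\<alpha> t * d t i)) \<le> (\<Sum>i\<in>UNIV. \<pi> i * (\<alpha> t * (1 + (d t i)\<^sup>2)))"
        using \<pi>_nonneg \<alpha>01 d_le by (intro sum_mono mult_left_mono) auto
      also have "\<dots> = \<alpha> t * (\<Sum>i\<in>UNIV. \<pi> i) + \<alpha> t * G2 t" unfolding G2_def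
        by (simp add: algebra_simps sum.distrib sum_distrib_left)
      also have "\<dots> = \<alpha> t + \<alpha> t * G2 t" unfolding \<pi>_sum by simp
      finally have st: "stp t \<le> \<beta> t * K + \<alpha> t + \<alpha> t * G2 t" unfolding stp_def by simp
      have "\<beta> t * K \<le> (K * (2/\<epsilon>)) * (\<beta> t * F t)"
        using mult_right_mono[OF fF[OF t] K0] True by (simp add: mult_ac)
      moreover have "\<alpha> t \<le> (4/(p*\<epsilon>\<^sup>2)) * (\<alpha> t * G2 t)" using qG[OF t] True by simp
      ultimately show ?thesis using st stp_nonneg[of t] True unfolding m_def by (simp add: algebra_simps)
    next
      case False
      then have "m t = 0" unfolding m_def by auto
      moreover have "0 \<le> (K * (2/\<epsilon>)) * (\<beta> t * F t) + (4/(p*\<epsilon>\<^sup>2) + 1) * (\<alpha> t * G2 t)"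
        using K0 \<epsilon> p \<beta>0[of t] F_nonneg[of t] \<alpha>01[of t] G2_nonneg[of t]
        by (intro add_nonneg_nonneg mult_nonneg_nonneg) auto
      ultimately show ?thesis by simp
    qed
  qed
  define Kc where "Kc = cball x0 R"
  have zK: "z t \<in> Kc" for t unfolding Kc_def mem_cball dist_norm
    using z_bound[OF R, of t] by (simp add: norm_minus_commute)
  define R1 where "R1 = Kc \<inter> {w. f w \<le> \<epsilon> \<and> 4 * \<epsilon> \<le> f w + q w}"
  define R2 where "R2 = Kc \<inter> {w. q w \<le> \<epsilon> \<and> 4 * \<epsilon> \<le> f w + q w}"
  have fqc: "continuous_on UNIV (\<lambda>w. f w + q w)" by (intro continuous_on_add f_cont q_cont)
  have cl1: "closed {w. f w \<le> \<epsilon> \<and> 4 * \<epsilon> \<le> f w + q w}"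
    by (intro closed_Collect_conj closed_Collect_le f_cont fqc continuous_on_const)
  have cl2: "closed {w. q w \<le> \<epsilon> \<and> 4 * \<epsilon> \<le> f w + q w}"
    by (intro closed_Collect_conj closed_Collect_le q_cont fqc continuous_on_const)
  have cR1: "compact R1" unfolding R1_def Kc_def by (intro compact_Int_closed compact_cball cl1)
  have clR2: "closed R2" unfolding R2_def Kc_def by (intro closed_Int closed_cball cl2)
  have disj: "R1 \<inter> R2 = {}" unfolding R1_def R2_def using \<epsilon> by auto
  obtain \<gamma> where \<gamma>: "\<gamma> > 0" "\<And>u w. u \<in> R1 \<Longrightarrow> w \<in> R2 \<Longrightarrow> \<gamma> \<le> dist u w"
    using separate_compact_closed[OF cR1 clR2 disj] by blast
  have inR1: "z t \<in> R1" if "t \<ge> T" "f (z t) \<le> \<epsilon>" for t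
    unfolding R1_def using zK H that by auto
  have inR2: "z t \<in> R2" if "t \<ge> T" "q (z t) \<le> \<epsilon>" for t
    unfolding R2_def using zK H that by auto
  obtain N1 where N1: "\<And>m' n. m' \<ge> N1 \<Longrightarrow> norm (sum m {m'..<n}) < \<gamma>/4"
    using ms[unfolded summable_Cauchy] \<gamma> by (metis zero_less_divide_iff zero_less_numeral)
  have "eventually (\<lambda>t. stp t < \<gamma>/4) sequentially"
    by (rule order_tendstoD(2)[OF stp_null]) (use \<gamma> in simp)
  then obtain N2 where N2: "\<And>t. t \<ge> N2 \<Longrightarrow> stp t < \<gamma>/4" by (auto simp: eventually_sequentially)
  define T2 where "T2 = max T1 (max N1 N2)"
  obtain T' where T': "T' \<ge> T2" "f (z T') \<le> \<epsilon>" using v1 by blast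
  have TT: "T' \<ge> T" "T' \<ge> N1" "T' \<ge> N2" using T' T1[of T1] unfolding T2_def by auto
  have inv: "\<exists>u\<in>R1. dist (z (T' + k)) u \<le> \<gamma>/4 + sum m {T'..<T'+k}" for k
  proof (induction k)
    case 0 then show ?case using inR1[OF TT(1) T'(2)] \<gamma> by (intro bexI[of _ "z T'"]) auto
  next
    case (Suc k)
    define t where "t = T' + k"
    from Suc obtain u where u: "u \<in> R1" "dist (z t) u \<le> \<gamma>/4 + sum m {T'..<t}" unfolding t_def by blast
    have S: "sum m {T'..<T' + Suc k} = sum m {T'..<t} + m t" unfolding t_def by simp
    have S0: "sum m {T'..<t} \<ge> 0" using m0 by (simp add: sum_nonneg)
    have S1: "sum m {T'..<t} < \<gamma>/4" using N1[OF TT(2), of t] S0 by simp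
    have tT: "t \<ge> T" "t \<ge> N2" using TT unfolding t_def by auto
    have step: "dist (z (Suc t)) (z t) \<le> stp t" using z_step[of t] by (simp add: dist_norm)
    have st: "stp t < \<gamma>/4" using N2[OF tT(2)] .
    have "T' + Suc k = Suc t" unfolding t_def by simp
    then show ?case unfolding S
    proof (cases "f (z t) \<le> \<epsilon>")
      case True
      show "\<exists>u\<in>R1. dist (z (T' + Suc k)) u \<le> \<gamma>/4 + (sum m {T'..<t} + m t)"
        using inR1[OF tT(1) True] step st S0 m0[of t] \<open>T' + Suc k = Suc t\<close>
        by (intro bexI[of _ "z t"]) auto
    next
      case False
      show "\<exists>u\<in>R1. dist (z (T' + Suc k)) u \<le> \<gamma>/4 + (sum m {T'..<t} + m t)"
      proof (cases "q (z t) \<le> \<epsilon>")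
        case True
        have "\<gamma> \<le> dist u (z t)" using \<gamma>(2)[OF u(1) inR2[OF tT(1) True]] .
        then show ?thesis using u(2) S1 \<gamma>(1) by (simp add: dist_commute)
      next
        case q: False
        have mt: "m t = stp t" unfolding m_def using False q by simp
        have "dist (z (Suc t)) u \<le> dist (z (Suc t)) (z t) + dist (z t) u" by (rule dist_triangle)
        then show ?thesis using u step mt \<open>T' + Suc k = Suc t\<close> by (intro bexI[of _ u]) auto
      qed
    qed
  qed
  obtain t where t: "t \<ge> T'" "q (z t) \<le> \<epsilon>" using v2 by blast
  have tR2: "z t \<in> R2" using inR2[OF _ t(2)] t(1) TT(1) by simp
  obtain u where u: "u \<in> R1" "dist (z t) u \<le> \<gamma>/4 + sum m {T'..<t}"
    using inv[of "t - T'"] t(1) by auto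
  have "sum m {T'..<t} < \<gamma>/4" using N1[OF TT(2), of t] m0 by (simp add: sum_nonneg)
  moreover have "\<gamma> \<le> dist u (z t)" using \<gamma>(2)[OF u(1) tR2] .
  ultimately show False using u(2) \<gamma>(1) by (simp add: dist_commute)
qed


theorem main:
  "(\<forall>i j. (\<lambda>t. norm (x t i - x t j)) \<longlonglongrightarrow> 0) \<and> (\<exists>l. sol l \<and> (\<forall>i. (\<lambda>t. x t i) \<longlonglongrightarrow> l))"
proof
  show "\<forall>i j. (\<lambda>t. norm (x t i - x t j)) \<longlonglongrightarrow> 0"
  proof (intro allI)
    fix i j
    show "(\<lambda>t. norm (x t i - x t j)) \<longlonglongrightarrow> 0"
      by (rule tendsto_sandwich[where f="\<lambda>_. 0" and h=D]) (use D_ge D_null in auto)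
  qed
  obtain R where R: "\<And>t i. norm (x t i - x0) \<le> R" using x_bounded by blast
  have "\<forall>k. \<exists>t\<ge>k. f (z t) + q (z t) < 1 / real (Suc k)"
    using liminf_zero by simp
  then obtain s where s: "\<And>k. s k \<ge> k" "\<And>k. f (z (s k)) + q (z (s k)) < 1 / real (Suc k)"
    by metis
  define Kc where "Kc = cball x0 R"
  have zK: "z t \<in> Kc" for t unfolding Kc_def mem_cball dist_norm
    using z_bound[OF R, of t] by (simp add: norm_minus_commute)
  have "seq_compact Kc" unfolding Kc_def by (intro compact_imp_seq_compact compact_cball)
  then obtain l r where lr: "l \<in> Kc" "strict_mono r" "((\<lambda>k. z (s k)) \<circ> r) \<longlonglongrightarrow> l"
    by (rule seq_compactE[of Kc "\<lambda>k. z (s k)"]) (use zK in auto)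
  have zl: "(\<lambda>k. z (s (r k))) \<longlonglongrightarrow> l" using lr(3) by (simp add: comp_def)
  have sr: "filterlim (\<lambda>k. s (r k)) at_top sequentially"
  proof (rule filterlim_at_top_mono[OF filterlim_ident])
    show "\<forall>\<^sub>F k in sequentially. k \<le> s (r k)"
    proof (rule always_eventually, rule allI)
      fix k show "k \<le> s (r k)" using s(1)[of "r k"] seq_suble[OF lr(2), of k] by linarith
    qed
  qed
  have fqc: "isCont (\<lambda>w. f w + q w) l"
    using continuous_on_add[OF f_cont q_cont] by (simp add: continuous_on_eq_continuous_at)
  have lim1: "(\<lambda>k. f (z (s (r k))) + q (z (s (r k)))) \<longlonglongrightarrow> f l + q l"
    using isCont_tendsto_compose[OF fqc zl] .
  have lim0: "(\<lambda>k. f (z (s (r k))) + q (z (s (r k)))) \<longlonglongrightarrow> 0"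
  proof (rule tendsto_sandwich[where f="\<lambda>_. 0" and h="\<lambda>k. 1 / real (Suc k)"])
    show "\<forall>\<^sub>F n in sequentially. 0 \<le> f (z (s (r n))) + q (z (s (r n)))"
      using f_nonneg q_nonneg by (simp add: add_nonneg_nonneg)
    have "f (z (s (r k))) + q (z (s (r k))) \<le> 1 / real (Suc k)" for k
    proof -
      have "f (z (s (r k))) + q (z (s (r k))) < 1 / real (Suc (r k))" by (rule s(2))
      also have "\<dots> \<le> 1 / real (Suc k)" using seq_suble[OF lr(2), of k]
        by (intro divide_left_mono) auto
      finally show ?thesis by simp
    qed
    then show "\<forall>\<^sub>F n in sequentially. f (z (s (r n))) + q (z (s (r n))) \<le> 1 / real (Suc n)" by simp
    show "(\<lambda>k. 1 / real (Suc k)) \<longlonglongrightarrow> 0" by (rule LIMSEQ_inverse_real_of_nat[unfolded inverse_eq_divide])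
  qed simp
  have fq0: "f l + q l = 0" using LIMSEQ_unique[OF lim1 lim0] .
  have fl: "f l = 0" and ql: "q l = 0" using fq0 f_nonneg[of l] q_nonneg[of l] by auto
  have "sol l" unfolding sol_def
  proof (intro allI conjI)
    fix i
    have "\<forall>i\<in>UNIV. \<pi> i * gp i l = 0"
      using fl unfolding f_def using \<pi>_nonneg gp_nonneg by (subst sum_nonneg_eq_0_iff[symmetric]) auto
    then have "\<pi> i * gp i l = 0" by blast
    then have "gp i l = 0" using \<pi>_pos[of i] by simp
    then show "g i l \<le> 0" unfolding gp_def by (simp add: max_def split: if_splits)
    have "\<forall>i\<in>UNIV. \<pi> i * infdist l (X i) = 0"
      using ql unfolding q_def using \<pi>_nonneg by (subst sum_nonneg_eq_0_iff[symmetric]) (auto simp: infdist_nonneg)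
    then have "\<pi> i * infdist l (X i) = 0" by blast
    then have "infdist l (X i) = 0" using \<pi>_pos[of i] by simp
    then show "l \<in> X i" using in_closed_iff_infdist_zero[OF X_closed X_ne] by simp
  qed
  obtain L where L: "V l \<longlonglongrightarrow> L" using V_conv[OF \<open>sol l\<close>] by (auto simp: convergent_def)
  have VL: "(\<lambda>k. V l (s (r k))) \<longlonglongrightarrow> L" using filterlim_compose[OF L sr] .
  have Vb: "V l t \<le> (D t + norm (z t - l))\<^sup>2" for t
  proof -
    have "V l t \<le> (\<Sum>i\<in>UNIV. \<pi> i * (D t + norm (z t - l))\<^sup>2)" unfolding V_def
    proof (intro sum_mono mult_left_mono \<pi>_nonneg power_mono)
      fix i
      have "norm (x t i - l) \<le> norm (x t i - z t) + norm (z t - l)"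
        by (rule order_trans[OF _ norm_triangle_ineq]) simp
      then show "norm (x t i - l) \<le> D t + norm (z t - l)" using z_x[of t i] by (simp add: norm_minus_commute)
    qed simp
    also have "\<dots> = (D t + norm (z t - l))\<^sup>2" by (simp add: sum_distrib_right[symmetric] \<pi>_sum)
    finally show ?thesis .
  qed
  have V0: "(\<lambda>k. V l (s (r k))) \<longlonglongrightarrow> 0"
  proof (rule tendsto_sandwich[where f="\<lambda>_. 0" and h="\<lambda>k. (D (s (r k)) + norm (z (s (r k)) - l))\<^sup>2"])
    show "\<forall>\<^sub>F n in sequentially. 0 \<le> V l (s (r n))" using V_nonneg by simp
    show "\<forall>\<^sub>F n in sequentially. V l (s (r n)) \<le> (D (s (r n)) + norm (z (s (r n)) - l))\<^sup>2" using Vb by simp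
    have "(\<lambda>k. D (s (r k))) \<longlonglongrightarrow> 0" using filterlim_compose[OF D_null sr] .
    moreover have "(\<lambda>k. norm (z (s (r k)) - l)) \<longlonglongrightarrow> 0"
      using tendsto_norm_zero[OF LIM_zero[OF zl]] .
    ultimately have "(\<lambda>k. (D (s (r k)) + norm (z (s (r k)) - l))\<^sup>2) \<longlonglongrightarrow> (0 + 0)\<^sup>2"
      by (intro tendsto_power tendsto_add)
    then show "(\<lambda>k. (D (s (r k)) + norm (z (s (r k)) - l))\<^sup>2) \<longlonglongrightarrow> 0" by simp
  qed simp
  have L0: "L = 0" using LIMSEQ_unique[OF VL V0] .
  have xl: "(\<lambda>t. x t i) \<longlonglongrightarrow> l" for i
  proof -
    have "(\<lambda>t. (norm (x t i - l))\<^sup>2) \<longlonglongrightarrow> 0"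
    proof (rule tendsto_sandwich[where f="\<lambda>_. 0" and h="\<lambda>t. V l t / \<pi> i"])
      show "\<forall>\<^sub>F n in sequentially. (norm (x n i - l))\<^sup>2 \<le> V l n / \<pi> i" using norm_le_V by simp
      show "(\<lambda>t. V l t / \<pi> i) \<longlonglongrightarrow> 0" using tendsto_divide_zero[OF L[unfolded L0]] .
    qed simp_all
    then have "(\<lambda>t. norm (x t i - l)) \<longlonglongrightarrow> 0" by (rule sqrt_null[rotated]) simp
    then show ?thesis by (simp add: tendsto_norm_zero_iff LIM_zero_iff)
  qed
  show "\<exists>l. sol l \<and> (\<forall>i. (\<lambda>t. x t i) \<longlonglongrightarrow> l)" using \<open>sol l\<close> xl by blast
qed

end



theorem theorem5:
  fixes a :: "'n::finite \<Rightarrow> 'n \<Rightarrow> real"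
    and g :: "'n \<Rightarrow> real^'m \<Rightarrow> real"
    and dg :: "'n \<Rightarrow> real^'m \<Rightarrow> real^'m"
    and X :: "'n \<Rightarrow> (real^'m) set"
    and K h :: real
    and \<alpha> \<beta> :: "nat \<Rightarrow> real"
    and x :: "nat \<Rightarrow> 'n \<Rightarrow> real^'m"
  assumes n2: "CARD('n) \<ge> 2"
    and a_nonneg: "\<forall>i j. a i j \<ge> 0"
    and a_noloop: "\<forall>i. a i i = 0"
    and sc: "strongly_connected a"
    and g_convex: "\<forall>i. convex_on UNIV (g i)"
    and g_cont: "\<forall>i. continuous_on UNIV (g i)"
    and X_closed: "\<forall>i. closed (X i)"
    and X_convex: "\<forall>i. convex (X i)"
    and dg_choice: "\<forall>i. plus_subgrad_choice (g i) (dg i)"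
    and nonempty: "cfp_solutions g X \<noteq> {}"
    and K: "K \<ge> 0" "\<forall>i y. norm (dg i y) \<le> K"
    and alpha: "\<forall>t. 0 \<le> \<alpha> t \<and> \<alpha> t \<le> 1"
      "filterlim (\<lambda>N. \<Sum>t<N. \<alpha> t) at_top sequentially"
      "summable (\<lambda>t. (\<alpha> t)\<^sup>2)"
    and beta: "\<forall>t. 0 \<le> \<beta> t"
      "filterlim (\<lambda>N. \<Sum>t<N. \<beta> t) at_top sequentially"
      "summable (\<lambda>t. (\<beta> t)\<^sup>2)"
    and h: "0 < h" "h < rho a"
    and dyn: "\<forall>t i.
      (let y = x t i + h *\<^sub>R (\<Sum>j\<in>neighbours a i. a i j *\<^sub>R (x t j - x t i));
           nab = \<beta> t *\<^sub>R dg i y;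
           \<xi> = y - nab;
           \<phi>' = \<alpha> t *\<^sub>R (\<xi> - closest_point (X i) \<xi>);
           \<phi> = - nab - \<phi>';
           u = h *\<^sub>R (\<Sum>j\<in>neighbours a i. a i j *\<^sub>R (x t j - x t i)) + \<phi>
       in x (Suc t) i = x t i + u)"
  shows "(\<forall>i j. (\<lambda>t. norm (x t i - x t j)) \<longlonglongrightarrow> 0)
         \<and> (\<exists>xs\<in>cfp_solutions g X. \<forall>i. (\<lambda>t. x t i) \<longlonglongrightarrow> xs)"
proof -
  define S where "S i = (\<Sum>k\<in>UNIV. a i k)" for i
  define W where "W i j = h * a i j + (if i = j then 1 - h * S i else 0)" for i j
  define y where "y t i = x t i + h *\<^sub>R (\<Sum>j\<in>neighbours a i. a i j *\<^sub>R (x t j - x t i))" for t i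
  have S0: "S i \<ge> 0" for i unfolding S_def using a_nonneg by (simp add: sum_nonneg)
  have Mx: "S i \<le> Max (range S)" for i by simp
  have hS: "h * S i < 1" for i
  proof -
    have "rho a \<le> 1 / Max (range S)" unfolding rho_def S_def by simp
    then have hM: "h < 1 / Max (range S)" using h by simp
    have Mpos: "Max (range S) > 0"
    proof (rule ccontr)
      assume "\<not> Max (range S) > 0"
      then have "Max (range S) \<le> 0" by linarith
      then have "1 / Max (range S) \<le> 0" by (intro divide_nonneg_nonpos) simp_all
      then show False using hM h by linarith
    qed
    have "h * S i \<le> h * Max (range S)" using Mx h by (intro mult_left_mono) auto
    also have "\<dots> < 1" using hM Mpos h by (simp add: field_simps)
    finally show ?thesis .
  qed
  have W0: "W i j \<ge> 0" for i j unfolding W_def using a_nonneg h hS[of i] by (auto intro!: add_nonneg_nonneg)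
  have Wd: "W i i > 0" for i unfolding W_def using a_noloop hS[of i] by simp
  have W1: "(\<Sum>j\<in>UNIV. W i j) = 1" for i
    unfolding W_def by (simp add: sum.distrib sum_distrib_left[symmetric] S_def)
  have rel: "{(u, v). a v u > 0} \<subseteq> {(u, v). W v u > 0}"
  proof clarify
    fix u v assume "a v u > 0"
    then have "u \<noteq> v" using a_noloop by auto
    then show "W v u > 0" unfolding W_def using \<open>a v u > 0\<close> h by simp
  qed
  have reach: "(j, i) \<in> {(u, v). W v u > 0}\<^sup>*" for i j
    using rtrancl_mono[OF rel] sc unfolding strongly_connected_def by blast
  obtain \<pi> where \<pi>: "\<And>i. \<pi> i > 0" "(\<Sum>i\<in>UNIV. \<pi> i) = 1" "\<And>j. (\<Sum>i\<in>UNIV. \<pi> i * W i j) = \<pi> j"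
    using stationary_exists[OF W0 W1 reach] by blast
  have Wpos: "\<exists>N>0. \<exists>\<delta>>0. \<forall>i j. mpow W N i j \<ge> \<delta>" by (rule mpow_uniform[OF W0 Wd reach])
  obtain x0 where x0: "x0 \<in> cfp_solutions g X" using nonempty by blast
  have x0s: "\<And>i. g i x0 \<le> 0" "\<And>i. x0 \<in> X i" using x0 unfolding cfp_solutions_def by auto
  have ydef: "y t i = (\<Sum>j\<in>UNIV. W i j *\<^sub>R x t j)" for t i
  proof -
    have "(\<Sum>j\<in>neighbours a i. a i j *\<^sub>R (x t j - x t i)) = (\<Sum>j\<in>UNIV. a i j *\<^sub>R (x t j - x t i))"
      by (rule sum.mono_neutral_left) (use a_nonneg in \<open>auto simp: neighbours_def not_less intro: order_antisym\<close>)
    also have "\<dots> = (\<Sum>j\<in>UNIV. a i j *\<^sub>R x t j) - S i *\<^sub>R x t i"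
      unfolding S_def by (simp add: scaleR_diff_right sum_subtractf scaleR_sum_left)
    finally have e1: "(\<Sum>j\<in>neighbours a i. a i j *\<^sub>R (x t j - x t i)) = (\<Sum>j\<in>UNIV. a i j *\<^sub>R x t j) - S i *\<^sub>R x t i" .
    have "(\<Sum>j\<in>UNIV. W i j *\<^sub>R x t j) = (\<Sum>j\<in>UNIV. (h * a i j) *\<^sub>R x t j) + (\<Sum>j\<in>UNIV. (if i = j then 1 - h * S i else 0) *\<^sub>R x t j)"
      unfolding W_def by (simp add: scaleR_add_left sum.distrib)
    also have "(\<Sum>j\<in>UNIV. (if i = j then 1 - h * S i else 0) *\<^sub>R x t j) = (1 - h * S i) *\<^sub>R x t i"
    proof -
      have "(\<Sum>j\<in>UNIV. (if i = j then 1 - h * S i else 0) *\<^sub>R x t j) = (\<Sum>j\<in>UNIV. if i = j then (1 - h * S i) *\<^sub>R x t j else 0)"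
        by (intro sum.cong) auto
      then show ?thesis by simp
    qed
    also have "(\<Sum>j\<in>UNIV. (h * a i j) *\<^sub>R x t j) = h *\<^sub>R (\<Sum>j\<in>UNIV. a i j *\<^sub>R x t j)"
      by (simp add: scaleR_sum_right)
    finally show ?thesis unfolding y_def e1 by (simp add: algebra_simps)
  qed
  have dyn': "x (Suc t) i = (1 - \<alpha> t) *\<^sub>R (y t i - \<beta> t *\<^sub>R dg i (y t i))
        + \<alpha> t *\<^sub>R closest_point (X i) (y t i - \<beta> t *\<^sub>R dg i (y t i))" for t i
  proof -
    have "x (Suc t) i = x t i + (h *\<^sub>R (\<Sum>j\<in>neighbours a i. a i j *\<^sub>R (x t j - x t i))
        + (- (\<beta> t *\<^sub>R dg i (y t i)) - \<alpha> t *\<^sub>R ((y t i - \<beta> t *\<^sub>R dg i (y t i)) - closest_point (X i) (y t i - \<beta> t *\<^sub>R dg i (y t i)))))"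
      using dyn[rule_format, of t i] unfolding y_def Let_def by simp
    then show ?thesis unfolding y_def by (simp add: algebra_simps)
  qed
  have dz: "\<And>i y. g i y \<le> 0 \<Longrightarrow> dg i y = 0"
    and ds: "\<And>i y z. g i y > 0 \<Longrightarrow> g i z \<ge> g i y + dg i y \<bullet> (z - y)"
    using dg_choice unfolding plus_subgrad_choice_def by auto
  interpret L: cfp_alg W \<pi> g dg X K \<alpha> \<beta> x x0 y
  proof
    show "\<And>i j. 0 \<le> W i j" by (rule W0)
    show "\<And>i. (\<Sum>j\<in>UNIV. W i j) = 1" by (rule W1)
    show "\<exists>N>0. \<exists>\<delta>>0. \<forall>i j. \<delta> \<le> mpow W N i j" by (rule Wpos)
    show "\<And>i. 0 < \<pi> i" by (rule \<pi>(1))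
    show "(\<Sum>i\<in>UNIV. \<pi> i) = 1" by (rule \<pi>(2))
    show "\<And>j. (\<Sum>i\<in>UNIV. \<pi> i * W i j) = \<pi> j" by (rule \<pi>(3))
    show "\<And>i. continuous_on UNIV (g i)" using g_cont by blast
    show "\<And>i. closed (X i)" using X_closed by blast
    show "\<And>i. convex (X i)" using X_convex by blast
    show "\<And>i y. g i y \<le> 0 \<Longrightarrow> dg i y = 0" by (rule dz)
    show "\<And>i y z. 0 < g i y \<Longrightarrow> g i y + dg i y \<bullet> (z - y) \<le> g i z" by (rule ds)
    show "0 \<le> K" by (rule K(1))
    show "\<And>i y. norm (dg i y) \<le> K" using K(2) by blast
    show "\<And>t. 0 \<le> \<alpha> t \<and> \<alpha> t \<le> 1" using alpha(1) by blast
    show "filterlim (\<lambda>N. \<Sum>t<N. \<alpha> t) at_top sequentially" by (rule alpha(2))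
    show "summable (\<lambda>t. (\<alpha> t)\<^sup>2)" by (rule alpha(3))
    show "\<And>t. 0 \<le> \<beta> t" using beta(1) by blast
    show "filterlim (\<lambda>N. \<Sum>t<N. \<beta> t) at_top sequentially" by (rule beta(2))
    show "summable (\<lambda>t. (\<beta> t)\<^sup>2)" by (rule beta(3))
    show "\<And>i. g i x0 \<le> 0" by (rule x0s(1))
    show "\<And>i. x0 \<in> X i" by (rule x0s(2))
    show "\<And>t i. x (Suc t) i = (1 - \<alpha> t) *\<^sub>R (y t i - \<beta> t *\<^sub>R dg i (y t i))
        + \<alpha> t *\<^sub>R closest_point (X i) (y t i - \<beta> t *\<^sub>R dg i (y t i))" by (rule dyn')
    show "\<And>t i. y t i = (\<Sum>j\<in>UNIV. W i j *\<^sub>R x t j)" by (rule ydef)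
  qed
  from L.main obtain l where c: "\<forall>i j. (\<lambda>t. norm (x t i - x t j)) \<longlonglongrightarrow> 0"
    and l: "L.sol l" "\<forall>i. (\<lambda>t. x t i) \<longlonglongrightarrow> l" by blast
  have "l \<in> cfp_solutions g X" using l(1) unfolding L.sol_def cfp_solutions_def by auto
  then show ?thesis using c l(2) by blast
qed


end
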